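(* Let $P$ be a fixed tree poset with $|P|$ elements. For every $\delta>0$ and positive integers $\ell,q$ there exists $\gamma=\gamma(\delta,\ell,q)>0$ such that the following holds for all $i,s\in[q]$ with $i\neq s$. Let $\mathcal{M}$ be an $\ell$-gapped family of $q$-marked chains with markers from $\widetilde{\mathcal{B}}_n$ and let $F\in\mathcal{L}^i(\mathcal{M})$. Suppose $F$ is $(i,s,\gamma)$-bad with respect to $\mathcal{M}$ and $n$ is sufficiently large. If $i<s$, then $F$ is $(i,\delta)$-lower bad with respect to $\mathcal{M}$; if $i>s$, then $F$ is $(i,\delta)$-upper bad with respect to $\mathcal{M}$.
   Context: $\widetilde{\mathcal{B}}_n=\{F\subseteq[n]: |\,|F|-n/2\,|<2\sqrt{n\ln n}\}$. Full chains, $q$-chains $(F_1\supsetneq\cdots\supsetneq F_q)$ with $i$-th member $F_i$, and $q$-marked chains $(\chi,Q)$ ($\chi$ a full chain $\emptyset\subsetneq\cdots\subsetneq[n]$ containing all members of the $q$-chain $Q$) are as usual. For a family $\mathcal{M}$ of $q$-marked chains, $\mathcal{L}^i(\mathcal{M})$ is the set of sets that are the $i$-th member of some $Q$ with $(\chi,Q)\in\mathcal{M}$, and $\mathcal{M}(F,i)$ is the set of $(\chi,Q)\in\mathcal{M}$ with $F$ the $i$-th member of $Q$. A family $\mathcal{F}$ is $\ell$-gapped if $|G\setminus F|\geq\ell$ whenever $F,G\in\mathcal{F}$, $F\subsetneq G$; $\mathcal{M}$ is $\ell$-gapped if the family of all members of its $q$-chains is. For $F\subseteq[n]$: $U(F)=\{S: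 S\supseteq F\}$, $D(F)=\{S:S\subseteq F\}$; for a family $\mathcal{S}$, $\mathrm{Comp}(\mathcal{S})$ is the set of subsets of $[n]$ comparable (by inclusion) to some member of $\mathcal{S}$; $D^*(F,\mathcal{S})=(D(F)\setminus\{F\})\cap\mathrm{Comp}(\mathcal{S})\cap\widetilde{\mathcal{B}}_n$ and $U^*(F,\mathcal{S})=(U(F)\setminus\{F\})\cap\mathrm{Comp}(\mathcal{S})\cap\widetilde{\mathcal{B}}_n$. For $i<s$, $F\in\mathcal{L}^i(\mathcal{M})$ is $(i,s,\gamma)$-bad w.r.t. $\mathcal{M}$ if there are $\mathcal{W}_1,\mathcal{W}_2\subseteq\widetilde{\mathcal{B}}_n$ with $\mathcal{W}_1\cap U(F)=\emptyset$, $|\mathcal{W}_1|\le|P|$, $|\mathcal{W}_2|\le\gamma n^{\ell(s-i)}$, and for every $(\chi,Q)\in\mathcal{M}(F,i)$ either $Q\cap D^*(F,\mathcal{W}_1)\neq\emptyset$ or the $s$-th member of $Q$ lies in $\mathcal{W}_2$. For $i>s$ it is defined analogously with $\mathcal{W}_1\cap D(F)=\emptyset$, $|\mathcal{W}_2|\le\gamma n^{\ell(i-s)}$, and $U^*(F,\mathcal{W}_1)$ in place of $D^*(F,\mathcal{W}_1)$. With $\chi_0$ a uniformly random full chain: $F$ is $(i,\delta)$-lower bad w.r.t. $\mathcal{M}$ if $\mathcal{M}(F,i)\neq\emptyset$ and some $\mathcal{W}$ satisfies (a) $D\subseteq F$ for all $D\in\mathcal{W}$, (b) $Q\cap\mathcal{W}\neq\emptyset$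 for every $(\chi,Q)\in\mathcal{M}(F,i)$, (c) $\Pr[\chi_0\cap\mathcal{W}\neq\emptyset\mid F\in\chi_0]\le\delta$; $(i,\delta)$-upper bad is the same with $D\supseteq F$ in (a). *)

theory Defs
  imports Complex_Main
begin

definition poset_on :: "'a set \<Rightarrow> ('a \<Rightarrow> 'a \<Rightarrow> bool) \<Rightarrow> bool" where
  "poset_on P le \<longleftrightarrow> (\<forall>x\<in>P. le x x) \<and>
     (\<forall>x\<in>P. \<forall>y\<in>P. le x y \<and> le y x \<longrightarrow> x = y) \<and>
     (\<forall>x\<in>P. \<forall>y\<in>P. \<forall>z\<in>P. le x y \<and> le y z \<longrightarrow> le x z)"

definition covers :: "'a set \<Rightarrow> ('a \<Rightarrow> 'a \<Rightarrow> bool) \<Rightarrow> 'a \<Rightarrow> 'a \<Rightarrow> bool" where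
  "covers P le x y \<longleftrightarrow> x \<in> P \<and> y \<in> P \<and> le x y \<and> x \<noteq> y \<and>
     \<not> (\<exists>z\<in>P. le x z \<and> le z y \<and> z \<noteq> x \<and> z \<noteq> y)"

definition hasse_edges :: "'a set \<Rightarrow> ('a \<Rightarrow> 'a \<Rightarrow> bool) \<Rightarrow> 'a set set" where
  "hasse_edges P le = {{x, y} | x y. covers P le x y}"

definition hasse_adj :: "'a set \<Rightarrow> ('a \<Rightarrow> 'a \<Rightarrow> bool) \<Rightarrow> ('a \<times> 'a) set" where
  "hasse_adj P le = {(x, y). covers P le x y \<or> covers P le y x}"

text \<open>A finite graph is a tree iff it is connected and has |V| - 1 edges.\<close>
definition tree_poset :: "'a set \<Rightarrow> ('a \<Rightarrow> 'a \<Rightarrow> bool) \<Rightarrow> bool" where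
  "tree_poset P le \<longleftrightarrow> finite P \<and> P \<noteq> {} \<and> poset_on P le \<and>
     (\<forall>x\<in>P. \<forall>y\<in>P. (x, y) \<in> (hasse_adj P le)\<^sup>*) \<and>
     card (hasse_edges P le) = card P - 1"

definition Btilde :: "nat \<Rightarrow> nat set set" where
  "Btilde n = {F. F \<subseteq> {1..n} \<and>
     \<bar>real (card F) - real n / 2\<bar> < 2 * sqrt (real n * ln (real n))}"

text \<open>A full chain is represented by its set of members
  \<open>\<emptyset> = C_0 \<subset> C_1 \<subset> \<dots> \<subset> C_n = [n]\<close>.\<close>
definition full_chain :: "nat \<Rightarrow> nat set set \<Rightarrow> bool" where
  "full_chain n \<chi> \<longleftrightarrow> \<chi> \<subseteq> Pow {1..n} \<and>
     (\<forall>A\<in>\<chi>. \<forall>B\<in>\<chi>. A \<subseteq> B \<or> B \<subseteq> A) \<and>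
     (\<forall>k\<le>n. \<exists>A\<in>\<chi>. card A = k)"

definition full_chains :: "nat \<Rightarrow> nat set set set" where
  "full_chains n = {\<chi>. full_chain n \<chi>}"

text \<open>A q-chain \<open>F_1 \<supset> \<dots> \<supset> F_q\<close> is a list of length q; its i-th member (1-indexed) is
  \<open>mem Q i = Q ! (i - 1)\<close>.\<close>
definition mem :: "nat set list \<Rightarrow> nat \<Rightarrow> nat set" where
  "mem Q i = Q ! (i - 1)"

definition q_chain :: "nat \<Rightarrow> nat set list \<Rightarrow> bool" where
  "q_chain q Q \<longleftrightarrow> length Q = q \<and> (\<forall>j. 1 \<le> j \<and> j < q \<longrightarrow> mem Q (j + 1) \<subset> mem Q j)"

definition q_marked_chain :: "nat \<Rightarrow> nat \<Rightarrow> nat set set \<times> nat set list \<Rightarrow> bool" where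
  "q_marked_chain n q m \<longleftrightarrow> full_chain n (fst m) \<and> q_chain q (snd m) \<and> set (snd m) \<subseteq> fst m"

definition gapped_family :: "nat \<Rightarrow> nat set set \<Rightarrow> bool" where
  "gapped_family l \<F> \<longleftrightarrow> (\<forall>F\<in>\<F>. \<forall>G\<in>\<F>. F \<subset> G \<longrightarrow> card (G - F) \<ge> l)"

definition members :: "(nat set set \<times> nat set list) set \<Rightarrow> nat set set" where
  "members \<M> = (\<Union>m\<in>\<M>. set (snd m))"

definition gapped_marked :: "nat \<Rightarrow> (nat set set \<times> nat set list) set \<Rightarrow> bool" where
  "gapped_marked l \<M> \<longleftrightarrow> gapped_family l (members \<M>)"

definition Lev :: "nat \<Rightarrow> (nat set set \<times> nat set list) set \<Rightarrow> nat set set" where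
  "Lev i \<M> = {mem (snd m) i | m. m \<in> \<M>}"

definition Msub :: "(nat set set \<times> nat set list) set \<Rightarrow> nat set \<Rightarrow> nat \<Rightarrow> (nat set set \<times> nat set list) set" where
  "Msub \<M> F i = {m \<in> \<M>. mem (snd m) i = F}"

definition Up :: "nat \<Rightarrow> nat set \<Rightarrow> nat set set" where
  "Up n F = {S. S \<subseteq> {1..n} \<and> F \<subseteq> S}"

definition Down :: "nat \<Rightarrow> nat set \<Rightarrow> nat set set" where
  "Down n F = {S. S \<subseteq> {1..n} \<and> S \<subseteq> F}"

definition Comp :: "nat \<Rightarrow> nat set set \<Rightarrow> nat set set" where
  "Comp n \<S> = {A. A \<subseteq> {1..n} \<and> (\<exists>B\<in>\<S>. A \<subseteq> B \<or> B \<subseteq> A)}"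

definition Dstar :: "nat \<Rightarrow> nat set \<Rightarrow> nat set set \<Rightarrow> nat set set" where
  "Dstar n F \<S> = (Down n F - {F}) \<inter> Comp n \<S> \<inter> Btilde n"

definition Ustar :: "nat \<Rightarrow> nat set \<Rightarrow> nat set set \<Rightarrow> nat set set" where
  "Ustar n F \<S> = (Up n F - {F}) \<inter> Comp n \<S> \<inter> Btilde n"

text \<open>\<open>(i,s,\<gamma>)\<close>-badness; \<open>p\<close> is \<open>|P|\<close>.\<close>
definition isg_bad :: "nat \<Rightarrow> nat \<Rightarrow> nat \<Rightarrow> nat \<Rightarrow> nat \<Rightarrow> real \<Rightarrow>
    (nat set set \<times> nat set list) set \<Rightarrow> nat set \<Rightarrow> bool" where
  "isg_bad n p l i s \<gamma> \<M> F \<longleftrightarrow> F \<in> Lev i \<M> \<and>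
     (if i < s then
       (\<exists>W1 W2. W1 \<subseteq> Btilde n \<and> W2 \<subseteq> Btilde n \<and> W1 \<inter> Up n F = {} \<and>
          card W1 \<le> p \<and> real (card W2) \<le> \<gamma> * real n ^ (l * (s - i)) \<and>
          (\<forall>m\<in>Msub \<M> F i. set (snd m) \<inter> Dstar n F W1 \<noteq> {} \<or> mem (snd m) s \<in> W2))
      else if s < i then
       (\<exists>W1 W2. W1 \<subseteq> Btilde n \<and> W2 \<subseteq> Btilde n \<and> W1 \<inter> Down n F = {} \<and>
          card W1 \<le> p \<and> real (card W2) \<le> \<gamma> * real n ^ (l * (i - s)) \<and>
          (\<forall>m\<in>Msub \<M> F i. set (snd m) \<inter> Ustar n F W1 \<noteq> {} \<or> mem (snd m) s \<in> W2))
      else False)"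

text \<open>\<open>Pr[\<chi>_0 \<inter> W \<noteq> \<emptyset> | F \<in> \<chi>_0]\<close> for a uniformly random full chain \<open>\<chi>_0\<close>.\<close>
definition cond_prob_hit :: "nat \<Rightarrow> nat set set \<Rightarrow> nat set \<Rightarrow> real" where
  "cond_prob_hit n W F =
     real (card {\<chi> \<in> full_chains n. F \<in> \<chi> \<and> \<chi> \<inter> W \<noteq> {}}) /
     real (card {\<chi> \<in> full_chains n. F \<in> \<chi>})"

definition lower_bad :: "nat \<Rightarrow> nat \<Rightarrow> real \<Rightarrow> (nat set set \<times> nat set list) set \<Rightarrow> nat set \<Rightarrow> bool" where
  "lower_bad n i \<delta> \<M> F \<longleftrightarrow> Msub \<M> F i \<noteq> {} \<and>
     (\<exists>W. (\<forall>D\<in>W. D \<subseteq> F) \<and> (\<forall>m\<in>Msub \<M> F i. set (snd m) \<inter> W \<noteq> {}) \<and>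
          cond_prob_hit n W F \<le> \<delta>)"

definition upper_bad :: "nat \<Rightarrow> nat \<Rightarrow> real \<Rightarrow> (nat set set \<times> nat set list) set \<Rightarrow> nat set \<Rightarrow> bool" where
  "upper_bad n i \<delta> \<M> F \<longleftrightarrow> Msub \<M> F i \<noteq> {} \<and>
     (\<exists>W. (\<forall>D\<in>W. F \<subseteq> D \<and> D \<subseteq> {1..n}) \<and> (\<forall>m\<in>Msub \<M> F i. set (snd m) \<inter> W \<noteq> {}) \<and>
          cond_prob_hit n W F \<le> \<delta>)"

end

theory Submission
  imports Defs "HOL-Combinatorics.Multiset_Permutations" "HOL-Real_Asymp.Real_Asymp"
begin


abbreviation PS where "PS \<equiv> permutations_of_set"

lemma card_split:
  assumes U: "finite U" "A \<subseteq> U"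
  shows "card {xs \<in> PS U. set (take (card A) xs) = A \<and> P (take (card A) xs) \<and> Q (drop (card A) xs)}
       = card {ys \<in> PS A. P ys} * card {zs \<in> PS (U - A). Q zs}"
proof -
  let ?L = "{xs \<in> PS U. set (take (card A) xs) = A \<and> P (take (card A) xs) \<and> Q (drop (card A) xs)}"
  let ?S = "{ys \<in> PS A. P ys} \<times> {zs \<in> PS (U - A). Q zs}"
  have fA: "finite A" using U finite_subset by blast
  have img: "?L = (\<lambda>(ys,zs). ys @ zs) ` ?S"
  proof
    show "?L \<subseteq> (\<lambda>(ys,zs). ys @ zs) ` ?S"
    proof
      fix xs assume xs: "xs \<in> ?L"
      then have d: "distinct xs" "set xs = U" by (auto simp: permutations_of_set_def)
      have "take (card A) xs \<in> PS A" using xs d by (auto simp: permutations_of_set_def)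
      moreover have "drop (card A) xs \<in> PS (U - A)"
      proof -
        have e: "set xs = set (take (card A) xs) \<union> set (drop (card A) xs)"
          by (metis append_take_drop_id set_append)
        have di: "set (take (card A) xs) \<inter> set (drop (card A) xs) = {}"
          using d(1) by (metis append_take_drop_id distinct_append)
        have "set (drop (card A) xs) = U - A" using e di d xs by auto
        then show ?thesis using d by (auto simp: permutations_of_set_def)
      qed
      ultimately show "xs \<in> (\<lambda>(ys,zs). ys @ zs) ` ?S" using xs
        by (auto intro!: image_eqI[of _ _ "(take (card A) xs, drop (card A) xs)"])
    qed
  next
    show "(\<lambda>(ys,zs). ys @ zs) ` ?S \<subseteq> ?L"
    proof
      fix xs assume "xs \<in> (\<lambda>(ys,zs). ys @ zs) ` ?S"
      then obtain ys zs where x: "xs = ys @ zs" "ys \<in> PS A" "P ys" "zs \<in> PS (U - A)" "Q zs" by auto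
      have ly: "length ys = card A" using x(2) length_finite_permutations_of_set by blast
      show "xs \<in> ?L" using x ly U by (auto simp: permutations_of_set_def)
    qed
  qed
  have inj: "inj_on (\<lambda>(ys,zs). ys @ zs) ?S"
  proof (rule inj_onI, clarsimp)
    fix a b c d assume "a \<in> PS A" "c \<in> PS A" "a @ b = c @ d"
    then show "a = c \<and> b = d"
      using length_finite_permutations_of_set by (metis append_eq_append_conv)
  qed
  have "card ?L = card ?S" unfolding img by (rule card_image[OF inj])
  also have "\<dots> = card {ys \<in> PS A. P ys} * card {zs \<in> PS (U - A). Q zs}" by (rule card_cartesian_product)
  finally show ?thesis .
qed

lemma card_prefix:
  assumes "finite U" "A \<subseteq> U"
  shows "card {xs \<in> PS U. set (take (card A) xs) = A} = fact (card A) * fact (card U - card A)"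
proof -
  have "card {xs \<in> PS U. set (take (card A) xs) = A \<and> True \<and> True} = card {ys \<in> PS A. True} * card {zs \<in> PS (U - A). True}"
    by (rule card_split[OF assms])
  moreover have "finite A" using assms finite_subset by blast
  ultimately show ?thesis using assms by (simp add: card_Diff_subset)
qed

lemma card_nth:
  assumes fA: "finite A" and y: "y \<in> A" and j: "j < card A"
  shows "card {ys \<in> PS A. ys ! j = y} = fact (card A - 1)"
proof -
  let ?ins = "\<lambda>zs. take j zs @ y # drop j zs"
  have img: "{ys \<in> PS A. ys ! j = y} = ?ins ` PS (A - {y})"
  proof
    show "{ys \<in> PS A. ys ! j = y} \<subseteq> ?ins ` PS (A - {y})"
    proof
      fix ys assume ys: "ys \<in> {ys \<in> PS A. ys ! j = y}"
      then have d: "distinct ys" "set ys = A" "ys ! j = y" by (auto simp: permutations_of_set_def)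
      have ly: "length ys = card A" using ys length_finite_permutations_of_set by blast
      have dec: "ys = take j ys @ y # drop (Suc j) ys" using d j ly id_take_nth_drop by metis
      let ?zs = "take j ys @ drop (Suc j) ys"
      have "distinct (take j ys @ y # drop (Suc j) ys)" using d dec by metis
      then have dz: "distinct ?zs" "y \<notin> set ?zs" by auto
      have "set ys = insert y (set ?zs)" using dec by (metis set_append list.simps(15) Un_insert_right Un_insert_left set_append)
      then have sz: "set ?zs = A - {y}" using dz d by auto
      have "?ins ?zs = ys" using dec ly j by (simp add: min_def)
      then show "ys \<in> ?ins ` PS (A - {y})" using dz sz by (auto intro!: image_eqI[of _ _ ?zs])
    qed
  next
    show "?ins ` PS (A - {y}) \<subseteq> {ys \<in> PS A. ys ! j = y}"
    proof
      fix ys assume "ys \<in> ?ins ` PS (A - {y})"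
      then obtain zs where z: "zs \<in> PS (A - {y})" "ys = ?ins zs" by auto
      have lz: "length zs = card A - 1" using z length_finite_permutations_of_set fA y by fastforce
      have "set zs = A - {y}" "distinct zs" using z by (auto simp: permutations_of_set_def)
      moreover have "set zs = set (take j zs) \<union> set (drop j zs)" by (metis append_take_drop_id set_append)
      moreover have "set (take j zs) \<inter> set (drop j zs) = {}" using \<open>distinct zs\<close>
        by (metis append_take_drop_id distinct_append)
      ultimately have "distinct ys" "set ys = A" using z y 
        by (auto simp: distinct_append)
      moreover have "ys ! j = y" using z lz j by (simp add: nth_append min_def)
      ultimately show "ys \<in> {ys \<in> PS A. ys ! j = y}" by (auto simp: permutations_of_set_def)
    qed
  qed
  have inj: "inj_on ?ins (PS (A - {y}))"
  proof (rule inj_onI)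
    fix a b assume a: "a \<in> PS (A - {y})" and b: "b \<in> PS (A - {y})" and e: "?ins a = ?ins b"
    have la: "length a = card A - 1" "length b = card A - 1"
      using a b length_finite_permutations_of_set fA y by fastforce+
    have lt: "length (take j a) = length (take j b)" using la by simp
    from e lt have "take j a = take j b \<and> y # drop j a = y # drop j b"
      using append_eq_append_conv by blast
    then show "a = b" by (metis append_take_drop_id list.inject)
  qed
  have "card {ys \<in> PS A. ys ! j = y} = card (PS (A - {y}))" unfolding img by (rule card_image[OF inj])
  also have "\<dots> = fact (card A - 1)" using fA y by simp
  finally show ?thesis .
qed



definition chain_of :: "nat list \<Rightarrow> nat set set" where
  "chain_of xs = {set (take k xs) | k. k \<le> length xs}"

lemma card_set_take: "distinct xs \<Longrightarrow> card (set (take k xs)) = min k (length xs)"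
  by (simp add: distinct_card)

lemma full_chain_of:
  assumes "xs \<in> PS {1..n}"
  shows "full_chain n (chain_of xs)"
proof -
  have d: "distinct xs" "set xs = {1..n}" using assms by (auto simp: permutations_of_set_def)
  have l: "length xs = n" using assms length_finite_permutations_of_set by fastforce
  have "chain_of xs \<subseteq> Pow {1..n}" unfolding chain_of_def using d
    by (auto dest: in_set_takeD)
  moreover have "\<forall>A\<in>chain_of xs. \<forall>B\<in>chain_of xs. A \<subseteq> B \<or> B \<subseteq> A"
  proof (intro ballI)
    fix A B assume "A \<in> chain_of xs" "B \<in> chain_of xs"
    then obtain k k' where "A = set (take k xs)" "B = set (take k' xs)" unfolding chain_of_def by blast
    then show "A \<subseteq> B \<or> B \<subseteq> A"
      using set_take_subset_set_take[of k k' xs] set_take_subset_set_take[of k' k xs]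
      by (cases "k \<le> k'") auto
  qed
  moreover have "\<forall>k\<le>n. \<exists>A\<in>chain_of xs. card A = k"
  proof (intro allI impI)
    fix k assume "k \<le> n"
    then show "\<exists>A\<in>chain_of xs. card A = k" unfolding chain_of_def
      using card_set_take[OF d(1), of k] l by (auto intro!: bexI[of _ "set (take k xs)"])
  qed
  ultimately show ?thesis unfolding full_chain_def by blast
qed

lemma in_chain_of:
  assumes "xs \<in> PS U" "finite U" "F \<subseteq> U"
  shows "F \<in> chain_of xs \<longleftrightarrow> set (take (card F) xs) = F"
proof -
  have d: "distinct xs" "set xs = U" using assms by (auto simp: permutations_of_set_def)
  have l: "length xs = card U" using assms length_finite_permutations_of_set by fastforce
  have cF: "card F \<le> card U" using assms card_mono by blast
  show ?thesis
  proof
    assume "F \<in> chain_of xs"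
    then obtain k where k: "k \<le> length xs" "F = set (take k xs)" unfolding chain_of_def by auto
    then have "card F = k" using card_set_take[OF d(1)] by simp
    then show "set (take (card F) xs) = F" using k by simp
  next
    assume "set (take (card F) xs) = F"
    then show "F \<in> chain_of xs" unfolding chain_of_def using cF l by force
  qed
qed

lemma chain_of_inj:
  assumes "finite U"
  shows "inj_on chain_of (PS U)"
proof (rule inj_onI)
  fix a b assume a: "a \<in> PS U" and b: "b \<in> PS U" and e: "chain_of a = chain_of b"
  have da: "distinct a" using a by (auto simp: permutations_of_set_def)
  have db: "distinct b" using b by (auto simp: permutations_of_set_def)
  have la: "length a = card U" using a length_finite_permutations_of_set by fastforce
  have lb: "length b = card U" using b length_finite_permutations_of_set by fastforce
  have st: "set (take k a) = set (take k b)" if k: "k \<le> card U" for k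
  proof -
    have "set (take k a) \<in> chain_of b" using e k la unfolding chain_of_def by auto
    then obtain k' where k': "k' \<le> length b" "set (take k a) = set (take k' b)"
      unfolding chain_of_def by auto
    have "k = k'" using card_set_take[OF da, of k] card_set_take[OF db, of k'] k k' la lb by simp
    then show ?thesis using k' by simp
  qed
  show "a = b"
  proof (rule nth_equalityI)
    show "length a = length b" using la lb by simp
  next
    fix i assume i: "i < length a"
    have ta: "take (Suc i) a = take i a @ [a ! i]" using i by (rule take_Suc_conv_app_nth)
    have ib0: "i < length b" using i la lb by simp
    have tb: "take (Suc i) b = take i b @ [b ! i]" using ib0 by (rule take_Suc_conv_app_nth)
    have "distinct (take (Suc i) a)" using da by simp
    then have na: "a ! i \<notin> set (take i a)" unfolding ta by simp
    have "distinct (take (Suc i) b)" using db by simp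
    then have nb: "b ! i \<notin> set (take i b)" unfolding tb by simp
    have ia: "set (take (Suc i) a) - set (take i a) = {a ! i}" unfolding ta using na by auto
    have ib: "set (take (Suc i) b) - set (take i b) = {b ! i}" unfolding tb using nb by auto
    have "set (take (Suc i) a) = set (take (Suc i) b)" "set (take i a) = set (take i b)"
      using st i la by auto
    then show "a ! i = b ! i" using ia ib by auto
  qed
qed

lemma chain_of_surj:
  assumes fc: "full_chain n \<chi>"
  shows "\<exists>xs\<in>PS {1..n}. \<chi> = chain_of xs"
proof -
  have sub: "\<chi> \<subseteq> Pow {1..n}" and cmp: "\<forall>A\<in>\<chi>. \<forall>B\<in>\<chi>. A \<subseteq> B \<or> B \<subseteq> A"
    and ex: "\<forall>k\<le>n. \<exists>A\<in>\<chi>. card A = k" using fc unfolding full_chain_def by auto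
  have fin: "finite A" if "A \<in> \<chi>" for A
  proof -
    have "A \<subseteq> {1..n}" using sub that by blast
    then show ?thesis by (rule finite_subset) simp
  qed
  have uniq: "A = B" if "A \<in> \<chi>" "B \<in> \<chi>" "card A = card B" for A B
  proof -
    have "A \<subseteq> B \<or> B \<subseteq> A" using cmp that by blast
    then show ?thesis
    proof
      assume "A \<subseteq> B" then show ?thesis using card_subset_eq[OF fin[OF that(2)] \<open>A \<subseteq> B\<close>] that(3) by (simp only:)
    next
      assume "B \<subseteq> A" then have "B = A" using card_subset_eq[OF fin[OF that(1)] \<open>B \<subseteq> A\<close>] that(3) by (simp only:)
      then show ?thesis by simp
    qed
  qed
  define Ak where "Ak k = (THE A. A \<in> \<chi> \<and> card A = k)" for k
  have Ak: "Ak k \<in> \<chi> \<and> card (Ak k) = k" if kn: "k \<le> n" for k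
  proof -
    obtain A where A: "A \<in> \<chi>" "card A = k" using ex kn by blast
    have "Ak k = A" unfolding Ak_def
    proof (rule the_equality)
      show "A \<in> \<chi> \<and> card A = k" using A by simp
    next
      fix B assume "B \<in> \<chi> \<and> card B = k"
      then show "B = A" using uniq[of B A] A by simp
    qed
    then show ?thesis using A by simp
  qed
  have Ak_eq: "C = Ak (card C)" if "C \<in> \<chi>" for C
  proof -
    have "card C \<le> n" using sub that card_mono[of "{1..n}" C] by auto
    then have "Ak (card C) \<in> \<chi>" "card (Ak (card C)) = card C" using Ak[of "card C"] by auto
    then show ?thesis using uniq[OF that] by simp
  qed
  have step: "Ak k \<subseteq> Ak (Suc k) \<and> (\<exists>a. Ak (Suc k) - Ak k = {a})" if k: "k < n" for k
  proof -
    have a1: "Ak k \<in> \<chi>" "card (Ak k) = k" using Ak[of k] k by auto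
    have a2: "Ak (Suc k) \<in> \<chi>" "card (Ak (Suc k)) = Suc k" using Ak[of "Suc k"] k by auto
    have f2: "finite (Ak (Suc k))" using fin a2 by blast
    have s: "Ak k \<subseteq> Ak (Suc k)"
    proof (rule ccontr)
      assume "\<not> Ak k \<subseteq> Ak (Suc k)"
      then have "Ak (Suc k) \<subseteq> Ak k" using cmp a1 a2 by blast
      then have "card (Ak (Suc k)) \<le> card (Ak k)" using card_mono[OF fin[OF a1(1)]] by blast
      then show False using a1 a2 by simp
    qed
    have "card (Ak (Suc k) - Ak k) = 1" using s f2 a1 a2 fin[OF a1(1)] by (simp add: card_Diff_subset)
    then obtain x where "Ak (Suc k) - Ak k = {x}" by (rule card_1_singletonE)
    then show ?thesis using s by blast
  qed
  define a where "a k = the_elem (Ak (Suc k) - Ak k)" for k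
  have a_eq: "Ak (Suc k) = insert (a k) (Ak k)" if kn: "k < n" for k
  proof -
    obtain x where x: "Ak (Suc k) - Ak k = {x}" using step[OF kn] by blast
    then have "a k = x" unfolding a_def by simp
    then show ?thesis using x step[OF kn] by auto
  qed
  define xs where "xs = map a [0..<n]"
  have lxs: "length xs = n" unfolding xs_def by simp
  have tk: "set (take k xs) = Ak k" if "k \<le> n" for k
    using that
  proof (induction k)
    case 0
    have "card (Ak 0) = 0" "Ak 0 \<in> \<chi>" using Ak[of 0] by auto
    then have "Ak 0 = {}" using fin[of "Ak 0"] by auto
    then show ?case by simp
  next
    case (Suc k)
    have "take (Suc k) xs = take k xs @ [a k]" unfolding xs_def using Suc.prems
      by (simp add: take_Suc_conv_app_nth)
    then show ?case using Suc a_eq[of k] by simp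
  qed
  have sxs: "set xs = Ak n" using tk[of n] lxs by simp
  have "card (set xs) = n" using sxs Ak[of n] by simp
  then have dxs: "distinct xs" using lxs by (simp add: card_distinct)
  have "Ak n \<subseteq> {1..n}" using Ak[of n] sub by auto
  then have "set xs = {1..n}" using sxs Ak[of n] by (simp add: card_subset_eq)
  then have xsP: "xs \<in> PS {1..n}" using dxs by (auto simp: permutations_of_set_def)
  have "\<chi> = chain_of xs"
  proof
    show "\<chi> \<subseteq> chain_of xs"
    proof
      fix C assume C: "C \<in> \<chi>"
      have "card C \<le> n" using sub C card_mono[of "{1..n}" C] by auto
      then have "C = set (take (card C) xs)" using Ak_eq[OF C] tk by simp
      then show "C \<in> chain_of xs" unfolding chain_of_def using lxs \<open>card C \<le> n\<close> by blast
    qed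
  next
    show "chain_of xs \<subseteq> \<chi>"
    proof
      fix C assume "C \<in> chain_of xs"
      then obtain k where "k \<le> n" "C = set (take k xs)" unfolding chain_of_def using lxs by auto
      then show "C \<in> \<chi>" using tk Ak by simp
    qed
  qed
  then show ?thesis using xsP by blast
qed

lemma finite_full_chains: "finite (full_chains n)"
proof -
  have "full_chains n \<subseteq> Pow (Pow {1..n})" unfolding full_chains_def full_chain_def by auto
  then show ?thesis by (rule finite_subset) simp
qed

lemma den_bound:
  assumes F: "F \<subseteq> {1..n}"
  shows "fact (card F) * fact (n - card F) \<le> card {\<chi> \<in> full_chains n. F \<in> \<chi>}"
proof -
  let ?U = "{1..n::nat}"
  let ?Pi = "{xs \<in> PS ?U. set (take (card F) xs) = F}"
  have cPi: "card ?Pi = fact (card F) * fact (n - card F)" using card_prefix[of ?U F] F by simp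
  have "chain_of ` ?Pi \<subseteq> {\<chi> \<in> full_chains n. F \<in> \<chi>}"
    using full_chain_of in_chain_of[of _ ?U F] F unfolding full_chains_def by auto
  moreover have "inj_on chain_of ?Pi" using chain_of_inj[of ?U] by (rule inj_on_subset) auto
  moreover have "finite {\<chi> \<in> full_chains n. F \<in> \<chi>}" using finite_full_chains by simp
  ultimately have "card (chain_of ` ?Pi) \<le> card {\<chi> \<in> full_chains n. F \<in> \<chi>}"
    "card (chain_of ` ?Pi) = card ?Pi" using card_mono card_image by blast+
  then have "card ?Pi \<le> card {\<chi> \<in> full_chains n. F \<in> \<chi>}" by simp
  then show ?thesis using cPi by simp
qed

lemma cph_lower:
  assumes F: "F \<subseteq> {1..n}" and W: "\<forall>D\<in>W. D \<subseteq> F"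
  shows "cond_prob_hit n W F \<le> real (card {ys \<in> PS F. \<exists>k\<le>card F. set (take k ys) \<in> W}) / fact (card F)"
proof -
  let ?U = "{1..n::nat}"
  let ?f = "card F"
  let ?H = "{ys \<in> PS F. \<exists>k\<le>card F. set (take k ys) \<in> W}"
  let ?Pi' = "{xs \<in> PS ?U. set (take ?f xs) = F \<and> (\<exists>k\<le>card F. set (take k (take ?f xs)) \<in> W) \<and> True}"
  have fF: "finite F" using F finite_subset by blast
  have cF: "?f \<le> n" using F card_mono[of ?U F] by simp
  have cPi': "card ?Pi' = card ?H * fact (n - ?f)"
    using card_split[of ?U F "\<lambda>ys. \<exists>k\<le>card F. set (take k ys) \<in> W" "\<lambda>_. True"] F fF
    by (simp add: card_Diff_subset)
  have incl: "{\<chi> \<in> full_chains n. F \<in> \<chi> \<and> \<chi> \<inter> W \<noteq> {}} \<subseteq> chain_of ` ?Pi'"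
  proof
    fix \<chi> assume "\<chi> \<in> {\<chi> \<in> full_chains n. F \<in> \<chi> \<and> \<chi> \<inter> W \<noteq> {}}"
    then have c: "full_chain n \<chi>" "F \<in> \<chi>" "\<chi> \<inter> W \<noteq> {}" unfolding full_chains_def by auto
    obtain xs where xs: "xs \<in> PS ?U" "\<chi> = chain_of xs" using chain_of_surj[OF c(1)] by blast
    have d: "distinct xs" using xs by (auto simp: permutations_of_set_def)
    have l: "length xs = n" using xs length_finite_permutations_of_set by fastforce
    have tF: "set (take ?f xs) = F" using in_chain_of[OF xs(1) _ F] c xs by simp
    obtain D where D: "D \<in> \<chi>" "D \<in> W" using c by blast
    obtain k where k: "k \<le> length xs" "D = set (take k xs)" using D xs unfolding chain_of_def by auto
    have "card D \<le> ?f" using W D fF card_mono by blast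
    then have kf: "k \<le> ?f" using card_set_take[OF d, of k] k by simp
    then have "set (take k (take ?f xs)) \<in> W" using D k by (simp add: min_def)
    then have "xs \<in> ?Pi'" using xs tF kf by blast
    then show "\<chi> \<in> chain_of ` ?Pi'" using xs by blast
  qed
  have num: "card {\<chi> \<in> full_chains n. F \<in> \<chi> \<and> \<chi> \<inter> W \<noteq> {}} \<le> card ?Pi'"
  proof -
    have "finite (chain_of ` ?Pi')" by simp
    then have "card {\<chi> \<in> full_chains n. F \<in> \<chi> \<and> \<chi> \<inter> W \<noteq> {}} \<le> card (chain_of ` ?Pi')"
      using incl by (rule card_mono)
    also have "\<dots> \<le> card ?Pi'" by (rule card_image_le) simp
    finally show ?thesis .
  qed
  have den: "fact ?f * fact (n - ?f) \<le> card {\<chi> \<in> full_chains n. F \<in> \<chi>}" by (rule den_bound[OF F])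
  have pos: "(0::real) < fact ?f * fact (n - ?f)" by simp
  have "cond_prob_hit n W F \<le> real (card ?H * fact (n - ?f)) / (fact ?f * fact (n - ?f))"
    unfolding cond_prob_hit_def
  proof (rule frac_le)
    show "0 \<le> real (card ?H * fact (n - ?f))" by simp
    show "real (card {\<chi> \<in> full_chains n. F \<in> \<chi> \<and> \<chi> \<inter> W \<noteq> {}}) \<le> real (card ?H * fact (n - ?f))"
      using num cPi' by linarith
    show "0 < (fact ?f * fact (n - ?f) :: real)" by (rule pos)
    show "(fact ?f * fact (n - ?f) :: real) \<le> real (card {\<chi> \<in> full_chains n. F \<in> \<chi>})"
    proof -
      have "real (fact ?f * fact (n - ?f)) \<le> real (card {\<chi> \<in> full_chains n. F \<in> \<chi>})"
        using den by (rule of_nat_mono)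
      then show ?thesis by simp
    qed
  qed
  also have "\<dots> = real (card ?H) / fact ?f" by simp
  finally show ?thesis .
qed

lemma cph_upper:
  assumes F: "F \<subseteq> {1..n}" and W: "\<forall>D\<in>W. F \<subseteq> D"
  shows "cond_prob_hit n W F \<le> real (card {zs \<in> PS ({1..n} - F). \<exists>k. F \<union> set (take k zs) \<in> W}) / fact (n - card F)"
proof -
  let ?U = "{1..n::nat}"
  let ?f = "card F"
  let ?H = "{zs \<in> PS (?U - F). \<exists>k. F \<union> set (take k zs) \<in> W}"
  let ?Pi' = "{xs \<in> PS ?U. set (take ?f xs) = F \<and> True \<and> (\<exists>k. F \<union> set (take k (drop ?f xs)) \<in> W)}"
  have fF: "finite F" using F finite_subset by blast
  have cF: "?f \<le> n" using F card_mono[of ?U F] by simp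
  have cPi': "card ?Pi' = fact ?f * card ?H"
    using card_split[of ?U F "\<lambda>_. True" "\<lambda>zs. \<exists>k. F \<union> set (take k zs) \<in> W"] F fF
    by simp
  have incl: "{\<chi> \<in> full_chains n. F \<in> \<chi> \<and> \<chi> \<inter> W \<noteq> {}} \<subseteq> chain_of ` ?Pi'"
  proof
    fix \<chi> assume "\<chi> \<in> {\<chi> \<in> full_chains n. F \<in> \<chi> \<and> \<chi> \<inter> W \<noteq> {}}"
    then have c: "full_chain n \<chi>" "F \<in> \<chi>" "\<chi> \<inter> W \<noteq> {}" unfolding full_chains_def by auto
    obtain xs where xs: "xs \<in> PS ?U" "\<chi> = chain_of xs" using chain_of_surj[OF c(1)] by blast
    have d: "distinct xs" using xs by (auto simp: permutations_of_set_def)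
    have l: "length xs = n" using xs length_finite_permutations_of_set by fastforce
    have tF: "set (take ?f xs) = F" using in_chain_of[OF xs(1) _ F] c xs by simp
    obtain D where D: "D \<in> \<chi>" "D \<in> W" using c by blast
    obtain k where k: "k \<le> length xs" "D = set (take k xs)" using D xs unfolding chain_of_def by auto
    have fD: "finite D" using k by simp
    have "?f \<le> card D" using W D fD card_mono by blast
    then have kf: "?f \<le> k" using card_set_take[OF d, of k] k by simp
    have "take k xs = take ?f xs @ take (k - ?f) (drop ?f xs)"
      using kf take_add[of ?f "k - ?f" xs] by simp
    then have "F \<union> set (take (k - ?f) (drop ?f xs)) \<in> W" using D k tF by simp
    then have "xs \<in> ?Pi'" using xs tF by blast
    then show "\<chi> \<in> chain_of ` ?Pi'" using xs by blast
  qed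
  have num: "card {\<chi> \<in> full_chains n. F \<in> \<chi> \<and> \<chi> \<inter> W \<noteq> {}} \<le> card ?Pi'"
  proof -
    have "finite (chain_of ` ?Pi')" by simp
    then have "card {\<chi> \<in> full_chains n. F \<in> \<chi> \<and> \<chi> \<inter> W \<noteq> {}} \<le> card (chain_of ` ?Pi')"
      using incl by (rule card_mono)
    also have "\<dots> \<le> card ?Pi'" by (rule card_image_le) simp
    finally show ?thesis .
  qed
  have den: "fact ?f * fact (n - ?f) \<le> card {\<chi> \<in> full_chains n. F \<in> \<chi>}" by (rule den_bound[OF F])
  have pos: "(0::real) < fact ?f * fact (n - ?f)" by simp
  have "cond_prob_hit n W F \<le> real (fact ?f * card ?H) / (fact ?f * fact (n - ?f))"
    unfolding cond_prob_hit_def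
  proof (rule frac_le)
    show "0 \<le> real (fact ?f * card ?H)" by simp
    show "real (card {\<chi> \<in> full_chains n. F \<in> \<chi> \<and> \<chi> \<inter> W \<noteq> {}}) \<le> real (fact ?f * card ?H)"
      using num cPi' by linarith
    show "0 < (fact ?f * fact (n - ?f) :: real)" by (rule pos)
    show "(fact ?f * fact (n - ?f) :: real) \<le> real (card {\<chi> \<in> full_chains n. F \<in> \<chi>})"
    proof -
      have "real (fact ?f * fact (n - ?f)) \<le> real (card {\<chi> \<in> full_chains n. F \<in> \<chi>})"
        using den by (rule of_nat_mono)
      then show ?thesis by simp
    qed
  qed
  also have "\<dots> = real (card ?H) / fact (n - ?f)" by simp
  finally show ?thesis .
qed



definition rr :: "nat \<Rightarrow> real" where "rr n = 2 * sqrt (real n * ln (real n))"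

lemma Btilde_iff: "S \<in> Btilde n \<longleftrightarrow> S \<subseteq> {1..n} \<and> \<bar>real (card S) - real n / 2\<bar> < rr n"
  unfolding Btilde_def rr_def by simp

lemma cardJ_low: "real (card {j. j < f \<and> a < real j}) \<le> max 0 (real f - a)"
proof (cases "a < 0")
  case True
  have "card {j. j < f \<and> a < real j} \<le> card {..<f}" by (rule card_mono) auto
  then show ?thesis using True by simp
next
  case False
  define c where "c = nat (\<lfloor>a\<rfloor> + 1)"
  have ca: "a < real c" unfolding c_def using False by linarith
  have sub: "{j. j < f \<and> a < real j} \<subseteq> {c..<f}"
  proof
    fix j assume "j \<in> {j. j < f \<and> a < real j}"
    then have "j < f" "a < real j" by auto
    then have "\<lfloor>a\<rfloor> + 1 \<le> int j" by linarith
    then show "j \<in> {c..<f}" unfolding c_def using \<open>j < f\<close> by auto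
  qed
  have "card {j. j < f \<and> a < real j} \<le> f - c" using card_mono[OF _ sub] by simp
  then have "real (card {j. j < f \<and> a < real j}) \<le> real (f - c)" by simp
  also have "\<dots> \<le> max 0 (real f - a)" using ca by (cases "c \<le> f") (auto simp: of_nat_diff)
  finally show ?thesis .
qed

lemma cardJ_up: "real (card {j. j < m \<and> real j < b}) \<le> max 0 b + 1"
proof -
  have sub: "{j. j < m \<and> real j < b} \<subseteq> {..<nat \<lceil>b\<rceil>}"
  proof
    fix j assume "j \<in> {j. j < m \<and> real j < b}"
    then have "real j < b" by auto
    then have "int j < \<lceil>b\<rceil>" by linarith
    then show "j \<in> {..<nat \<lceil>b\<rceil>}" by auto
  qed
  have "card {j. j < m \<and> real j < b} \<le> nat \<lceil>b\<rceil>" using card_mono[OF _ sub] by simp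
  then have "real (card {j. j < m \<and> real j < b}) \<le> real (nat \<lceil>b\<rceil>)" by simp
  also have "\<dots> \<le> max 0 b + 1"
  proof (cases "b \<le> 0")
    case True
    then have "\<lceil>b\<rceil> \<le> 0" by simp
    then show ?thesis by simp
  next
    case False
    then have "0 \<le> \<lceil>b\<rceil>" by simp
    then have "real (nat \<lceil>b\<rceil>) = of_int \<lceil>b\<rceil>" by simp
    also have "\<dots> \<le> b + 1" by (rule of_int_ceiling_le_add_one)
    finally show ?thesis using False by simp
  qed
  finally show ?thesis .
qed

lemma card_UN_bound:
  assumes "finite I" "\<And>i. i \<in> I \<Longrightarrow> card (A i) \<le> c"
  shows "card (\<Union>i\<in>I. A i) \<le> card I * c"
proof -
  have "card (\<Union>i\<in>I. A i) \<le> (\<Sum>i\<in>I. card (A i))" by (rule card_UN_le[OF assms(1)])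
  also have "\<dots> \<le> (\<Sum>i\<in>I. c)" using assms(2) by (rule sum_mono)
  finally show ?thesis by simp
qed



lemma lower_count:
  assumes Fb: "F \<in> Btilde n"
    and W1: "finite W1" "W1 \<subseteq> Btilde n" "\<forall>B\<in>W1. \<not> F \<subseteq> B"
    and W2: "finite W2" "\<forall>G\<in>W2. G \<subseteq> F"
  shows "real (card {ys \<in> PS F. \<exists>k\<le>card F. set (take k ys) \<in> Dstar n F W1 \<union> W2})
     \<le> real (card W1) * (4 * rr n) * fact (card F - 1)
        + (\<Sum>G\<in>W2. fact (card G) * fact (card F - card G))"
proof -
  define f where "f = card F"
  have F: "F \<subseteq> {1..n}" and fr: "\<bar>real f - real n / 2\<bar> < rr n" using Fb unfolding Btilde_iff f_def by auto
  have fF: "finite F" using F finite_subset by blast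
  define J where "J = {j. j < f \<and> real n / 2 - rr n < real j}"
  define xB where "xB B = (SOME x. x \<in> F - B)" for B
  have xB: "xB B \<in> F - B" if "B \<in> W1" for B
  proof -
    have "\<exists>x. x \<in> F - B" using W1(3) that by blast
    then show ?thesis unfolding xB_def by (rule someI_ex)
  qed
  define E where "E j y = {ys \<in> PS F. ys ! j = y}" for j y
  define W1' where "W1' = {B \<in> W1. B \<subseteq> F}"
  define U1 where "U1 = (\<Union>B\<in>W1. \<Union>j\<in>J. E j (xB B))"
  define U2 where "U2 = (\<Union>B\<in>W1'. \<Union>y\<in>F-B. E (f - 1) y)"
  define U3 where "U3 = (\<Union>G\<in>W2. {ys \<in> PS F. set (take (card G) ys) = G})"
  let ?H = "{ys \<in> PS F. \<exists>k\<le>card F. set (take k ys) \<in> Dstar n F W1 \<union> W2}"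
  have incl: "?H \<subseteq> U1 \<union> U2 \<union> U3"
  proof
    fix ys assume "ys \<in> ?H"
    then obtain k where ys: "ys \<in> PS F" and kf: "k \<le> f" and S: "set (take k ys) \<in> Dstar n F W1 \<union> W2"
      unfolding f_def by blast
    have d: "distinct ys" "set ys = F" using ys by (auto simp: permutations_of_set_def)
    have ly: "length ys = f" using ys length_finite_permutations_of_set unfolding f_def by blast
    have ck: "card (set (take k ys)) = k" using card_set_take[OF d(1), of k] kf ly by simp
    show "ys \<in> U1 \<union> U2 \<union> U3"
    proof (cases "set (take k ys) \<in> W2")
      case True
      have m: "ys \<in> {ys \<in> PS F. set (take (card (set (take k ys))) ys) = set (take k ys)}"
        using ys ck by simp
      have "ys \<in> U3" unfolding U3_def using True m by blast
      then show ?thesis by blast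
    next
      case False
      then have Sd: "set (take k ys) \<in> Dstar n F W1" using S by blast
      have Sne: "set (take k ys) \<noteq> F" using Sd unfolding Dstar_def by blast
      have SB: "set (take k ys) \<in> Btilde n" using Sd unfolding Dstar_def by blast
      have Sc: "set (take k ys) \<in> Comp n W1" using Sd unfolding Dstar_def by blast
      have kf': "k < f"
      proof (rule ccontr)
        assume "\<not> k < f"
        then have "k = f" using kf by simp
        then have "set (take k ys) = F" using d ly by simp
        then show False using Sne by simp
      qed
      obtain B where B: "B \<in> W1" "set (take k ys) \<subseteq> B \<or> B \<subseteq> set (take k ys)"
        using Sc unfolding Comp_def by blast
      have kr: "real n / 2 - rr n < real k" using SB ck unfolding Btilde_iff by auto
      show ?thesis
      proof (cases "set (take k ys) \<subseteq> B")
        case True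
        have x: "xB B \<in> F - B" using xB B(1) by blast
        then have xn: "xB B \<notin> set (take k ys)" using True by blast
        have "xB B \<in> set ys" using x d(2) by blast
        then obtain j where j: "j < length ys" "ys ! j = xB B" by (auto simp: in_set_conv_nth)
        have "k \<le> j"
        proof (rule ccontr)
          assume "\<not> k \<le> j"
          then have jk: "j < k" by simp
          have "take k ys ! j \<in> set (take k ys)" by (rule nth_mem) (use jk j(1) in simp)
          then have "ys ! j \<in> set (take k ys)" using jk by simp
          then show False using j xn by simp
        qed
        then have "j \<in> J" unfolding J_def using j ly kr by auto
        then have "ys \<in> E j (xB B)" unfolding E_def using ys j by simp
        then have "ys \<in> U1" unfolding U1_def using B(1) \<open>j \<in> J\<close> by blast
        then show ?thesis by blast
      next
        case False
        then have BS: "B \<subseteq> set (take k ys)" using B by blast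
        have f1: "f - 1 < length ys" using kf' ly by simp
        have tS: "set (take k ys) \<subseteq> set (take (f - 1) ys)" using kf' by (intro set_take_subset_set_take) simp
        have tf: "take f ys = take (f - 1) ys @ [ys ! (f - 1)]"
          using take_Suc_conv_app_nth[OF f1] kf' by simp
        have "distinct (take f ys)" using d by simp
        then have yn: "ys ! (f - 1) \<notin> set (take (f - 1) ys)" unfolding tf by simp
        have yF: "ys ! (f - 1) \<in> F" using f1 d(2) nth_mem by blast
        have BF: "B \<subseteq> F" using BS set_take_subset[of k ys] d(2) by blast
        have "ys ! (f - 1) \<in> F - B" using yn yF BS tS by blast
        moreover have "B \<in> W1'" unfolding W1'_def using B(1) BF by simp
        moreover have "ys \<in> E (f - 1) (ys ! (f - 1))" unfolding E_def using ys by simp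
        ultimately have "ys \<in> U2" unfolding U2_def by blast
        then show ?thesis by blast
      qed
    qed
  qed
  have finPS: "finite (PS F)" by simp
  have fU: "finite (U1 \<union> U2 \<union> U3)"
  proof -
    have "U1 \<union> U2 \<union> U3 \<subseteq> PS F" unfolding U1_def U2_def U3_def E_def by auto
    then show ?thesis using finPS by (rule finite_subset)
  qed
  have fJ: "finite J" unfolding J_def by simp
  have cE: "card (E j y) = fact (f - 1)" if "j < f" "y \<in> F" for j y
    unfolding E_def f_def using card_nth[OF fF that(2)] that(1) f_def by simp
  have c1: "card U1 \<le> card W1 * (card J * fact (f - 1))"
    unfolding U1_def
  proof (rule card_UN_bound[OF W1(1)])
    fix B assume B: "B \<in> W1"
    show "card (\<Union>j\<in>J. E j (xB B)) \<le> card J * fact (f - 1)"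
    proof (rule card_UN_bound[OF fJ])
      fix j assume "j \<in> J"
      then have "j < f" unfolding J_def by simp
      then show "card (E j (xB B)) \<le> fact (f - 1)" using cE xB[OF B] by simp
    qed
  qed
  have c2: "real (card U2) \<le> real (card W1) * (2 * rr n * fact (f - 1))"
  proof -
    have "card U2 \<le> (\<Sum>B\<in>W1'. card (\<Union>y\<in>F-B. E (f - 1) y))"
      unfolding U2_def by (rule card_UN_le) (use W1(1) in \<open>simp add: W1'_def\<close>)
    also have "\<dots> \<le> (\<Sum>B\<in>W1'. card (F - B) * fact (f - 1))"
    proof (rule sum_mono)
      fix B assume B: "B \<in> W1'"
      show "card (\<Union>y\<in>F-B. E (f - 1) y) \<le> card (F - B) * fact (f - 1)"
      proof (rule card_UN_bound)
        show "finite (F - B)" using fF by simp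
        fix y assume y: "y \<in> F - B"
        then have "F \<noteq> {}" by blast
        then have "f \<ge> 1" using fF unfolding f_def by (simp add: Suc_le_eq card_gt_0_iff)
        then show "card (E (f - 1) y) \<le> fact (f - 1)" using cE y by simp
      qed
    qed
    finally have "real (card U2) \<le> real (\<Sum>B\<in>W1'. card (F - B) * fact (f - 1))"
      by (rule of_nat_mono)
    also have "\<dots> = (\<Sum>B\<in>W1'. real (card (F - B)) * fact (f - 1))" by (simp add: of_nat_sum)
    also have "\<dots> \<le> (\<Sum>B\<in>W1'. 2 * rr n * fact (f - 1))"
    proof (rule sum_mono)
      fix B assume B: "B \<in> W1'"
      then have BF: "B \<subseteq> F" and Bb: "B \<in> Btilde n" using W1(2) unfolding W1'_def by auto
      have "\<bar>real (card B) - real n / 2\<bar> < rr n" using Bb unfolding Btilde_iff by simp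
      moreover have "card (F - B) = f - card B" using BF fF unfolding f_def by (simp add: card_Diff_subset finite_subset)
      moreover have "card B \<le> f" using BF fF unfolding f_def by (simp add: card_mono)
      ultimately have "real (card (F - B)) \<le> 2 * rr n" using fr by (simp add: of_nat_diff)
      then show "real (card (F - B)) * fact (f - 1) \<le> 2 * rr n * fact (f - 1)"
        by (rule mult_right_mono) simp
    qed
    also have "\<dots> = real (card W1') * (2 * rr n * fact (f - 1))" by simp
    also have "\<dots> \<le> real (card W1) * (2 * rr n * fact (f - 1))"
    proof (rule mult_right_mono)
      show "real (card W1') \<le> real (card W1)" unfolding W1'_def using W1(1) by (simp add: card_mono)
      show "0 \<le> 2 * rr n * fact (f - 1)" using fr by simp
    qed
    finally show ?thesis .
  qed
  have c3: "card U3 \<le> (\<Sum>G\<in>W2. fact (card G) * fact (f - card G))"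
  proof -
    have "card U3 \<le> (\<Sum>G\<in>W2. card {ys \<in> PS F. set (take (card G) ys) = G})"
      unfolding U3_def by (rule card_UN_le[OF W2(1)])
    also have "\<dots> = (\<Sum>G\<in>W2. fact (card G) * fact (f - card G))"
      using card_prefix[OF fF] W2(2) unfolding f_def by (intro sum.cong) auto
    finally show ?thesis .
  qed
  have cJ: "real (card J) \<le> 2 * rr n"
  proof -
    have "real (card J) \<le> max 0 (real f - (real n / 2 - rr n))" unfolding J_def by (rule cardJ_low)
    also have "\<dots> \<le> 2 * rr n" using fr by simp
    finally show ?thesis .
  qed
  have "card ?H \<le> card (U1 \<union> U2 \<union> U3)" by (rule card_mono[OF fU incl])
  also have "\<dots> \<le> card U1 + card U2 + card U3"
  proof -
    have "card (U1 \<union> U2 \<union> U3) \<le> card (U1 \<union> U2) + card U3" by (rule card_Un_le)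
    moreover have "card (U1 \<union> U2) \<le> card U1 + card U2" by (rule card_Un_le)
    ultimately show ?thesis by linarith
  qed
  finally have "real (card ?H) \<le> real (card U1) + real (card U2) + real (card U3)" by simp
  also have "\<dots> \<le> real (card W1) * (real (card J) * fact (f - 1)) + real (card W1) * (2 * rr n * fact (f - 1))
       + (\<Sum>G\<in>W2. fact (card G) * fact (f - card G))"
  proof -
    have "real (card U1) \<le> real (card W1 * (card J * fact (f - 1)))"
      using c1 by (rule of_nat_mono)
    then have "real (card U1) \<le> real (card W1) * (real (card J) * fact (f - 1))" by simp
    moreover have "real (card U3) \<le> real (\<Sum>G\<in>W2. fact (card G) * fact (f - card G))"
      using c3 by (rule of_nat_mono)
    moreover have "real (\<Sum>G\<in>W2. fact (card G) * fact (f - card G)) = (\<Sum>G\<in>W2. fact (card G) * fact (f - card G))"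
      by (simp add: of_nat_sum)
    ultimately show ?thesis using c2 by linarith
  qed
  also have "\<dots> \<le> real (card W1) * (2 * rr n * fact (f - 1)) + real (card W1) * (2 * rr n * fact (f - 1))
       + (\<Sum>G\<in>W2. fact (card G) * fact (f - card G))"
  proof -
    have "real (card J) * fact (f - 1) \<le> 2 * rr n * fact (f - 1)" using cJ by (rule mult_right_mono) simp
    then have "real (card W1) * (real (card J) * fact (f - 1)) \<le> real (card W1) * (2 * rr n * fact (f - 1))"
      by (rule mult_left_mono) simp
    then show ?thesis by linarith
  qed
  also have "\<dots> = real (card W1) * (4 * rr n) * fact (card F - 1) + (\<Sum>G\<in>W2. fact (card G) * fact (card F - card G))"
    unfolding f_def by (simp add: algebra_simps)
  finally show ?thesis .
qed



lemma upper_count: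
  assumes Fb: "F \<in> Btilde n"
    and W1: "finite W1" "W1 \<subseteq> Btilde n" "\<forall>B\<in>W1. \<not> B \<subseteq> F"
    and W2: "finite W2" "\<forall>G\<in>W2. F \<subseteq> G \<and> G \<subseteq> {1..n}"
  shows "real (card {zs \<in> PS ({1..n} - F). \<exists>k. F \<union> set (take k zs) \<in> Ustar n F W1 \<union> W2})
     \<le> real (card W1) * (4 * rr n + 1) * fact (n - card F - 1)
        + (\<Sum>G\<in>W2. fact (card (G - F)) * fact (n - card F - card (G - F)))"
proof -
  define f where "f = card F"
  define V where "V = {1..n} - F"
  define m where "m = n - f"
  have F: "F \<subseteq> {1..n}" and fr: "\<bar>real f - real n / 2\<bar> < rr n" using Fb unfolding Btilde_iff f_def by auto
  have fF: "finite F" using F finite_subset by blast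
  have fV: "finite V" unfolding V_def by simp
  have cV: "card V = m" unfolding V_def m_def f_def using F fF by (simp add: card_Diff_subset)
  define J where "J = {j. j < m \<and> real j < real n / 2 + rr n - real f}"
  define xB where "xB B = (SOME x. x \<in> B - F)" for B
  have xB: "xB B \<in> B - F" if "B \<in> W1" for B
  proof -
    have "\<exists>x. x \<in> B - F" using W1(3) that by blast
    then show ?thesis unfolding xB_def by (rule someI_ex)
  qed
  define E where "E j y = {zs \<in> PS V. zs ! j = y}" for j y
  define W1' where "W1' = {B \<in> W1. F \<subseteq> B}"
  define U1 where "U1 = (\<Union>B\<in>W1. \<Union>j\<in>J. E j (xB B))"
  define U2 where "U2 = (\<Union>B\<in>W1'. \<Union>y\<in>B-F. E 0 y)"
  define U3 where "U3 = (\<Union>G\<in>W2. {zs \<in> PS V. set (take (card (G - F)) zs) = G - F})"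
  let ?H = "{zs \<in> PS V. \<exists>k. F \<union> set (take k zs) \<in> Ustar n F W1 \<union> W2}"
  have incl: "?H \<subseteq> U1 \<union> U2 \<union> U3"
  proof
    fix zs assume "zs \<in> ?H"
    then obtain k where zs: "zs \<in> PS V" and S: "F \<union> set (take k zs) \<in> Ustar n F W1 \<union> W2"
      by blast
    have d: "distinct zs" "set zs = V" using zs by (auto simp: permutations_of_set_def)
    have lz: "length zs = m" using zs length_finite_permutations_of_set cV by metis
    define k' where "k' = min k m"
    have ck: "card (set (take k zs)) = k'" using card_set_take[OF d(1), of k] lz unfolding k'_def by simp
    have tk: "take k' zs = take k zs" unfolding k'_def using lz by (simp add: min_def)
    have dis: "set (take k zs) \<inter> F = {}" using set_take_subset[of k zs] d(2) unfolding V_def by blast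
    have cS: "card (F \<union> set (take k zs)) = f + k'"
      using card_Un_disjoint[OF fF _ , of "set (take k zs)"] dis ck unfolding f_def by auto
    have GF: "(F \<union> set (take k zs)) - F = set (take k zs)" using dis by blast
    show "zs \<in> U1 \<union> U2 \<union> U3"
    proof (cases "F \<union> set (take k zs) \<in> W2")
      case True
      have m: "zs \<in> {zs \<in> PS V. set (take (card ((F \<union> set (take k zs)) - F)) zs) = (F \<union> set (take k zs)) - F}"
        using zs ck tk GF by simp
      have "zs \<in> U3" unfolding U3_def using True m by blast
      then show ?thesis by blast
    next
      case False
      then have Sd: "F \<union> set (take k zs) \<in> Ustar n F W1" using S by blast
      have Sne: "F \<union> set (take k zs) \<noteq> F" using Sd unfolding Ustar_def by blast
      have SB: "F \<union> set (take k zs) \<in> Btilde n" using Sd unfolding Ustar_def by blast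
      have Sc: "F \<union> set (take k zs) \<in> Comp n W1" using Sd unfolding Ustar_def by blast
      have kpos: "1 \<le> k'"
      proof (rule ccontr)
        assume "\<not> 1 \<le> k'"
        then have "k' = 0" by simp
        then have "set (take k zs) = {}" using tk by (metis list.set(1) take0)
        then have "F \<union> set (take k zs) = F" by (simp only: Un_empty_right)
        then show False using Sne by contradiction
      qed
      obtain B where B: "B \<in> W1" "F \<union> set (take k zs) \<subseteq> B \<or> B \<subseteq> F \<union> set (take k zs)"
        using Sc unfolding Comp_def by blast
      have kr: "real f + real k' < real n / 2 + rr n" using SB cS unfolding Btilde_iff by auto
      show ?thesis
      proof (cases "B \<subseteq> F \<union> set (take k zs)")
        case True
        have x: "xB B \<in> B - F" using xB B(1) by blast
        then have xn: "xB B \<in> set (take k' zs)" using True tk by auto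
        then obtain j where j: "j < length (take k' zs)" "take k' zs ! j = xB B" by (auto simp: in_set_conv_nth)
        have jk: "j < k'" using j(1) by simp
        have "zs ! j = xB B" using j jk by simp
        moreover have "j \<in> J" unfolding J_def using jk kr k'_def by auto
        ultimately have "zs \<in> E j (xB B)" unfolding E_def using zs by simp
        then have "zs \<in> U1" unfolding U1_def using B(1) \<open>j \<in> J\<close> by blast
        then show ?thesis by blast
      next
        case False
        then have SBB: "F \<union> set (take k zs) \<subseteq> B" using B by blast
        have m0: "0 < length (take k zs)" using kpos tk lz unfolding k'_def by simp
        have y1: "zs ! 0 \<in> set (take k zs)" using nth_mem[OF m0] m0 by (simp add: nth_take)
        have y2: "zs ! 0 \<notin> F" using y1 dis by blast
        have "zs ! 0 \<in> B - F" using y1 y2 SBB by blast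
        moreover have "B \<in> W1'" unfolding W1'_def using B(1) SBB by simp
        moreover have "zs \<in> E 0 (zs ! 0)" unfolding E_def using zs by simp
        ultimately have "zs \<in> U2" unfolding U2_def by blast
        then show ?thesis by blast
      qed
    qed
  qed
  have finPS: "finite (PS V)" by simp
  have fU: "finite (U1 \<union> U2 \<union> U3)"
  proof -
    have "U1 \<union> U2 \<union> U3 \<subseteq> PS V" unfolding U1_def U2_def U3_def E_def by auto
    then show ?thesis using finPS by (rule finite_subset)
  qed
  have fJ: "finite J" unfolding J_def by simp
  have cE: "card (E j y) = fact (m - 1)" if "j < m" "y \<in> V" for j y
    unfolding E_def using card_nth[OF fV that(2)] that(1) cV by simp
  have BV: "B - F \<subseteq> V" if B1: "B \<in> W1" for B
  proof -
    have "B \<in> Btilde n" using W1(2) B1 by blast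
    then have "B \<subseteq> {1..n}" unfolding Btilde_iff by simp
    then show ?thesis unfolding V_def by blast
  qed
  have c1: "card U1 \<le> card W1 * (card J * fact (m - 1))"
    unfolding U1_def
  proof (rule card_UN_bound[OF W1(1)])
    fix B assume B: "B \<in> W1"
    show "card (\<Union>j\<in>J. E j (xB B)) \<le> card J * fact (m - 1)"
    proof (rule card_UN_bound[OF fJ])
      fix j assume "j \<in> J"
      then have "j < m" unfolding J_def by simp
      then show "card (E j (xB B)) \<le> fact (m - 1)" using cE xB[OF B] BV[OF B] by auto
    qed
  qed
  have c2: "real (card U2) \<le> real (card W1) * (2 * rr n * fact (m - 1))"
  proof -
    have "card U2 \<le> (\<Sum>B\<in>W1'. card (\<Union>y\<in>B-F. E 0 y))"
      unfolding U2_def by (rule card_UN_le) (use W1(1) in \<open>simp add: W1'_def\<close>)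
    also have "\<dots> \<le> (\<Sum>B\<in>W1'. card (B - F) * fact (m - 1))"
    proof (rule sum_mono)
      fix B assume B: "B \<in> W1'"
      then have B1: "B \<in> W1" unfolding W1'_def by simp
      show "card (\<Union>y\<in>B-F. E 0 y) \<le> card (B - F) * fact (m - 1)"
      proof (rule card_UN_bound)
        show "finite (B - F)" using finite_subset[OF BV[OF B1] fV] .
        fix y assume y: "y \<in> B - F"
        then have yV: "y \<in> V" using BV[OF B1] by blast
        then have "V \<noteq> {}" by blast
        then have "card V > 0" using fV by (simp add: card_gt_0_iff)
        then have "m \<ge> 1" using cV by simp
        then show "card (E 0 y) \<le> fact (m - 1)" using cE yV by simp
      qed
    qed
    finally have "real (card U2) \<le> real (\<Sum>B\<in>W1'. card (B - F) * fact (m - 1))"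
      by (rule of_nat_mono)
    also have "\<dots> = (\<Sum>B\<in>W1'. real (card (B - F)) * fact (m - 1))" by (simp add: of_nat_sum)
    also have "\<dots> \<le> (\<Sum>B\<in>W1'. 2 * rr n * fact (m - 1))"
    proof (rule sum_mono)
      fix B assume B: "B \<in> W1'"
      then have FB: "F \<subseteq> B" and Bb: "B \<in> Btilde n" using W1(2) unfolding W1'_def by auto
      have Bn: "B \<subseteq> {1..n}" using Bb unfolding Btilde_iff by simp
      have fB: "finite B" using Bn finite_subset by blast
      have "\<bar>real (card B) - real n / 2\<bar> < rr n" using Bb unfolding Btilde_iff by simp
      moreover have "card (B - F) = card B - f" using FB fF unfolding f_def by (simp add: card_Diff_subset)
      moreover have "f \<le> card B" using FB fB unfolding f_def by (simp add: card_mono)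
      ultimately have "real (card (B - F)) \<le> 2 * rr n" using fr by (simp add: of_nat_diff)
      then show "real (card (B - F)) * fact (m - 1) \<le> 2 * rr n * fact (m - 1)"
        by (rule mult_right_mono) simp
    qed
    also have "\<dots> = real (card W1') * (2 * rr n * fact (m - 1))" by simp
    also have "\<dots> \<le> real (card W1) * (2 * rr n * fact (m - 1))"
    proof (rule mult_right_mono)
      show "real (card W1') \<le> real (card W1)" unfolding W1'_def using W1(1) by (simp add: card_mono)
      show "0 \<le> 2 * rr n * fact (m - 1)" using fr by simp
    qed
    finally show ?thesis .
  qed
  have c3: "card U3 \<le> (\<Sum>G\<in>W2. fact (card (G - F)) * fact (m - card (G - F)))"
  proof -
    have "card U3 \<le> (\<Sum>G\<in>W2. card {zs \<in> PS V. set (take (card (G - F)) zs) = G - F})"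
      unfolding U3_def by (rule card_UN_le[OF W2(1)])
    also have "\<dots> = (\<Sum>G\<in>W2. fact (card (G - F)) * fact (m - card (G - F)))"
    proof (rule sum.cong)
      fix G assume G: "G \<in> W2"
      then have "G - F \<subseteq> V" using W2(2) unfolding V_def by blast
      then show "card {zs \<in> PS V. set (take (card (G - F)) zs) = G - F} = fact (card (G - F)) * fact (m - card (G - F))"
        using card_prefix[OF fV] cV by simp
    qed simp
    finally show ?thesis .
  qed
  have cJ: "real (card J) \<le> 2 * rr n + 1"
  proof -
    have "J = {j. j < m \<and> real j < real n / 2 + rr n - real f}" unfolding J_def by simp
    then have "real (card J) \<le> max 0 (real n / 2 + rr n - real f) + 1" using cardJ_up by simp
    also have "\<dots> \<le> 2 * rr n + 1" using fr by simp
    finally show ?thesis .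
  qed
  have "card ?H \<le> card (U1 \<union> U2 \<union> U3)" by (rule card_mono[OF fU incl])
  also have "\<dots> \<le> card U1 + card U2 + card U3"
  proof -
    have "card (U1 \<union> U2 \<union> U3) \<le> card (U1 \<union> U2) + card U3" by (rule card_Un_le)
    moreover have "card (U1 \<union> U2) \<le> card U1 + card U2" by (rule card_Un_le)
    ultimately show ?thesis by linarith
  qed
  finally have "real (card ?H) \<le> real (card U1) + real (card U2) + real (card U3)" by simp
  also have "\<dots> \<le> real (card W1) * (real (card J) * fact (m - 1)) + real (card W1) * (2 * rr n * fact (m - 1))
       + (\<Sum>G\<in>W2. fact (card (G - F)) * fact (m - card (G - F)))"
  proof -
    have "real (card U1) \<le> real (card W1 * (card J * fact (m - 1)))"
      using c1 by (rule of_nat_mono)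
    then have "real (card U1) \<le> real (card W1) * (real (card J) * fact (m - 1))" by simp
    moreover have "real (card U3) \<le> real (\<Sum>G\<in>W2. fact (card (G - F)) * fact (m - card (G - F)))"
      using c3 by (rule of_nat_mono)
    moreover have "real (\<Sum>G\<in>W2. fact (card (G - F)) * fact (m - card (G - F))) = (\<Sum>G\<in>W2. fact (card (G - F)) * fact (m - card (G - F)))"
      by (simp add: of_nat_sum)
    ultimately show ?thesis using c2 by linarith
  qed
  also have "\<dots> \<le> real (card W1) * ((2 * rr n + 1) * fact (m - 1)) + real (card W1) * (2 * rr n * fact (m - 1))
       + (\<Sum>G\<in>W2. fact (card (G - F)) * fact (m - card (G - F)))"
  proof -
    have "real (card J) * fact (m - 1) \<le> (2 * rr n + 1) * fact (m - 1)" using cJ by (rule mult_right_mono) simp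
    then have "real (card W1) * (real (card J) * fact (m - 1)) \<le> real (card W1) * ((2 * rr n + 1) * fact (m - 1))"
      by (rule mult_left_mono) simp
    then show ?thesis by linarith
  qed
  also have "\<dots> = real (card W1) * (4 * rr n + 1) * fact (n - card F - 1)
        + (\<Sum>G\<in>W2. fact (card (G - F)) * fact (n - card F - card (G - F)))"
    unfolding m_def f_def by (simp add: algebra_simps)
  finally show ?thesis unfolding V_def .
qed




lemma mem_in_set: "q_chain q Q \<Longrightarrow> 1 \<le> j \<Longrightarrow> j \<le> q \<Longrightarrow> mem Q j \<in> set Q"
  unfolding q_chain_def mem_def by auto

lemma gap:
  assumes qc: "q_chain q Q" and gf: "gapped_family l (set Q)" and fin: "\<forall>X\<in>set Q. finite X"
    and a1: "1 \<le> a"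
  shows "a \<le> b \<Longrightarrow> b \<le> q \<Longrightarrow> mem Q b \<subseteq> mem Q a \<and> l * (b - a) \<le> card (mem Q a - mem Q b)"
proof (induction b)
  case 0
  then show ?case using a1 by simp
next
  case (Suc k)
  show ?case
  proof (cases "a = Suc k")
    case True
    then show ?thesis by simp
  next
    case False
    then have ak: "a \<le> k" "k \<le> q" using Suc.prems by auto
    have IH: "mem Q k \<subseteq> mem Q a \<and> l * (k - a) \<le> card (mem Q a - mem Q k)" using Suc.IH ak by blast
    have k1: "1 \<le> k" "k < q" using ak a1 Suc.prems by auto
    have ps: "mem Q (Suc k) \<subset> mem Q k" using qc k1 unfolding q_chain_def by simp
    have ink: "mem Q k \<in> set Q" using mem_in_set[OF qc] k1 by simp
    have inS: "mem Q (Suc k) \<in> set Q" using mem_in_set[OF qc] k1 Suc.prems by simp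
    have ina: "mem Q a \<in> set Q" using mem_in_set[OF qc] a1 ak by simp
    have gl: "l \<le> card (mem Q k - mem Q (Suc k))" using gf ps ink inS unfolding gapped_family_def by blast
    have fa: "finite (mem Q a)" using fin ina by blast
    have fk: "finite (mem Q k)" using fin ink by blast
    have split: "mem Q a - mem Q (Suc k) = (mem Q a - mem Q k) \<union> (mem Q k - mem Q (Suc k))"
      using IH ps by blast
    have disj: "(mem Q a - mem Q k) \<inter> (mem Q k - mem Q (Suc k)) = {}" by blast
    have "card (mem Q a - mem Q (Suc k)) = card (mem Q a - mem Q k) + card (mem Q k - mem Q (Suc k))"
      unfolding split using disj fa fk by (simp add: card_Un_disjoint)
    moreover have "l * (Suc k - a) = l * (k - a) + l" using ak by (simp add: Suc_diff_le)
    ultimately have "l * (Suc k - a) \<le> card (mem Q a - mem Q (Suc k))" using IH gl by linarith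
    moreover have "mem Q (Suc k) \<subseteq> mem Q a" using IH ps by blast
    ultimately show ?thesis by blast
  qed
qed

lemma binom_ratio_bound:
  assumes "L \<le> g" "L \<le> f - g" "g \<le> f" "real n / 4 \<le> real f" "0 < n"
  shows "fact g * fact (f - g) / fact f \<le> (4 * real L / real n) ^ L"
proof -
  have "0 < real n / 4" using assms(5) by simp
  then have fpos: "0 < real f" using assms(4) by linarith
  have Lf: "L \<le> f" using assms by linarith
  have c1: "f choose L \<le> f choose g"
  proof (cases "2 * g \<le> f")
    case True
    then show ?thesis using assms(1) by (rule binomial_mono[rotated])
  next
    case False
    have "f choose L \<le> f choose (f - g)" using assms(2) False by (intro binomial_mono) auto
    also have "\<dots> = f choose g" using assms(3) by (rule binomial_symmetric[symmetric])
    finally show ?thesis .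
  qed
  have c2: "(real f / real L) ^ L \<le> real (f choose L)" using Lf by (rule binomial_ge_n_over_k_pow_k)
  have c2pos: "0 < (real f / real L) ^ L"
    using fpos by (cases "L = 0") (auto intro: zero_less_power)
  have eq: "fact g * fact (f - g) / fact f = 1 / real (f choose g)"
  proof -
    have "0 < f choose g" using assms(3) by (rule zero_less_binomial)
    then have "real (f choose g) \<noteq> 0" by simp
    have e: "(fact g * fact (f - g) :: real) * real (f choose g) = fact f"
      using binomial_fact_lemma[OF assms(3)] by (metis of_nat_fact of_nat_mult)
    show ?thesis unfolding e[symmetric] by simp
  qed
  have "1 / real (f choose g) \<le> 1 / (real f / real L) ^ L"
  proof (rule divide_left_mono)
    have "real (f choose L) \<le> real (f choose g)" using c1 by (rule of_nat_mono)
    then show cc: "(real f / real L) ^ L \<le> real (f choose g)" using c2 by linarith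
    then have "0 < real (f choose g)" using c2pos by linarith
    then show "0 < real (f choose g) * (real f / real L) ^ L" using c2pos by (rule mult_pos_pos)
  qed simp
  also have "\<dots> = (real L / real f) ^ L" by (simp add: power_divide)
  also have "\<dots> \<le> (4 * real L / real n) ^ L"
  proof (rule power_mono)
    show "real L / real f \<le> 4 * real L / real n"
    proof (cases "L = 0")
      case True then show ?thesis by simp
    next
      case False
      have "real n \<le> 4 * real f" using assms(4) by simp
      then have "real L * real n \<le> 4 * real L * real f" using False
        by (metis mult.assoc mult.left_commute mult_le_cancel_left_pos of_nat_0_less_iff zero_less_iff_neq_zero)
      then show ?thesis using fpos assms(5) by (simp add: divide_simps)
    qed
    show "0 \<le> real L / real f" by simp
  qed
  finally show ?thesis using eq by simp
qed



lemma gapped_family_mono: "gapped_family l A \<Longrightarrow> B \<subseteq> A \<Longrightarrow> gapped_family l B"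
  unfolding gapped_family_def by blast

lemma finite_Btilde: "finite (Btilde n)"
proof -
  have "Btilde n \<subseteq> Pow {1..n}" unfolding Btilde_def by auto
  then show ?thesis by (rule finite_subset) simp
qed

lemma power_bound_L:
  assumes "1 \<le> L" "L \<le> K"
  shows "(4 * real L) ^ L \<le> (4 * real K) ^ K"
proof -
  have "(4 * real L) ^ L \<le> (4 * real K) ^ L" by (rule power_mono) (use assms in auto)
  also have "\<dots> \<le> (4 * real K) ^ K" by (rule power_increasing) (use assms in auto)
  finally show ?thesis .
qed

lemma W2_bound:
  assumes "finite W2'" "W2' \<subseteq> W2" "finite W2" "real (card W2) \<le> \<gamma> * real n ^ L" "0 < n"
    and "\<And>G. G \<in> W2' \<Longrightarrow> t G \<le> (4 * real L / real n) ^ L"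
    and "1 \<le> L" "L \<le> K" "\<gamma> * (4 * real K) ^ K \<le> \<delta> / 2" "0 < \<gamma>"
  shows "(\<Sum>G\<in>W2'. t G) \<le> \<delta> / 2"
proof -
  have "(\<Sum>G\<in>W2'. t G) \<le> (\<Sum>G\<in>W2'. (4 * real L / real n) ^ L)" using assms(6) by (rule sum_mono)
  also have "\<dots> = real (card W2') * (4 * real L / real n) ^ L" by simp
  also have "\<dots> \<le> real (card W2) * (4 * real L / real n) ^ L"
    by (rule mult_right_mono) (use assms(2,3) card_mono in auto)
  also have "\<dots> \<le> \<gamma> * real n ^ L * (4 * real L / real n) ^ L"
    by (rule mult_right_mono) (use assms(4) in auto)
  also have "\<dots> = \<gamma> * (real n * (4 * real L / real n)) ^ L" by (metis mult.assoc power_mult_distrib)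
  also have "\<dots> = \<gamma> * (4 * real L) ^ L" using assms(5) by simp
  also have "\<dots> \<le> \<gamma> * (4 * real K) ^ K" using power_bound_L[OF assms(7,8)] assms(10) by simp
  also have "\<dots> \<le> \<delta> / 2" by (rule assms(9))
  finally show ?thesis .
qed

lemma lower_case:
  fixes M :: "(nat set set \<times> nat set list) set" and F :: "nat set"
  assumes big: "rr n \<le> real n / 4" "real (l * q) \<le> real n / 4" "real p * (4 * rr n + 1) * 4 / real n \<le> \<delta> / 2" "0 < n"
    and gam: "\<gamma> * (4 * real (l * q)) ^ (l * q) \<le> \<delta> / 2" "0 < \<gamma>"
    and l1: "1 \<le> l" and isq: "1 \<le> i" "i < s" "s \<le> q"
    and Mc: "\<forall>m\<in>M. q_marked_chain n q m \<and> set (snd m) \<subseteq> Btilde n"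
    and gM: "gapped_marked l M" and FL: "F \<in> Lev i M" and bad: "isg_bad n p l i s \<gamma> M F"
  shows "lower_bad n i \<delta> M F"
proof -
  obtain W1 W2 where W: "W1 \<subseteq> Btilde n" "W2 \<subseteq> Btilde n" "W1 \<inter> Up n F = {}" "card W1 \<le> p"
    "real (card W2) \<le> \<gamma> * real n ^ (l * (s - i))"
    "\<forall>m\<in>Msub M F i. set (snd m) \<inter> Dstar n F W1 \<noteq> {} \<or> mem (snd m) s \<in> W2"
    using bad isq(2) unfolding isg_bad_def by auto
  define L where "L = l * (s - i)"
  obtain m0 where m0: "m0 \<in> M" "mem (snd m0) i = F" using FL unfolding Lev_def by blast
  have qc0: "q_chain q (snd m0)" using Mc m0(1) unfolding q_marked_chain_def by blast
  have FB: "F \<in> Btilde n" using mem_in_set[OF qc0, of i] isq m0 Mc by auto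
  have Fn: "F \<subseteq> {1..n}" using FB unfolding Btilde_iff by simp
  have fr: "\<bar>real (card F) - real n / 2\<bar> < rr n" using FB unfolding Btilde_iff by simp
  have fW1: "finite W1" using W(1) finite_Btilde finite_subset by blast
  have fW2: "finite W2" using W(2) finite_Btilde finite_subset by blast
  define W2' where "W2' = {G \<in> W2. G \<subseteq> F \<and> L \<le> card (F - G)}"
  define W where "W = Dstar n F W1 \<union> W2'"
  have fW2': "finite W2'" unfolding W2'_def using fW2 by simp
  have WF: "\<forall>D\<in>W. D \<subseteq> F" unfolding W_def W2'_def Dstar_def Down_def by auto
  have W1F: "\<forall>B\<in>W1. \<not> F \<subseteq> B"
  proof
    fix B assume B: "B \<in> W1"
    then have "B \<in> Btilde n" using W(1) by blast
    then have "B \<subseteq> {1..n}" unfolding Btilde_iff by simp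
    then show "\<not> F \<subseteq> B" using W(3) B unfolding Up_def by blast
  qed
  have Msne: "Msub M F i \<noteq> {}" unfolding Msub_def using m0 by blast
  have hit: "\<forall>m\<in>Msub M F i. set (snd m) \<inter> W \<noteq> {}"
  proof
    fix m assume mM: "m \<in> Msub M F i"
    then have m1: "m \<in> M" "mem (snd m) i = F" unfolding Msub_def by auto
    show "set (snd m) \<inter> W \<noteq> {}"
    proof (cases "set (snd m) \<inter> Dstar n F W1 \<noteq> {}")
      case True
      then show ?thesis unfolding W_def by blast
    next
      case False
      then have G: "mem (snd m) s \<in> W2" using W(6) mM by blast
      have qc: "q_chain q (snd m)" using Mc m1(1) unfolding q_marked_chain_def by blast
      have gf: "gapped_family l (set (snd m))"
      proof -
        have "gapped_family l (members M)" using gM unfolding gapped_marked_def .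
        moreover have "set (snd m) \<subseteq> members M" unfolding members_def using m1(1) by blast
        ultimately show ?thesis by (rule gapped_family_mono)
      qed
      have finQ: "\<forall>X\<in>set (snd m). finite X"
      proof
        fix X assume "X \<in> set (snd m)"
        then have "X \<in> Btilde n" using Mc m1(1) by blast
        then have "X \<subseteq> {1..n}" unfolding Btilde_iff by simp
        then show "finite X" by (rule finite_subset) simp
      qed
      have g: "mem (snd m) s \<subseteq> mem (snd m) i \<and> l * (s - i) \<le> card (mem (snd m) i - mem (snd m) s)"
        using gap[OF qc gf finQ isq(1)] isq by simp
      have "mem (snd m) s \<in> W2'" unfolding W2'_def L_def using G g m1(2) by simp
      moreover have "mem (snd m) s \<in> set (snd m)" using mem_in_set[OF qc] isq by simp
      ultimately show ?thesis unfolding W_def by blast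
    qed
  qed
  define f where "f = card F"
  have fbig: "real n / 4 \<le> real f" using fr big(1) unfolding f_def by linarith
  have fpos: "0 < f" using fbig big(4) by (metis (mono_tags) divide_pos_pos gr0I of_nat_0 of_nat_0_less_iff
        order_less_le_trans zero_less_numeral)
  let ?H = "{ys \<in> PS F. \<exists>k\<le>card F. set (take k ys) \<in> W}"
  have c1: "cond_prob_hit n W F \<le> real (card ?H) / fact f"
    using cph_lower[OF Fn WF] unfolding f_def .
  have c2: "real (card ?H) \<le> real (card W1) * (4 * rr n) * fact (f - 1)
        + (\<Sum>G\<in>W2'. fact (card G) * fact (f - card G))"
    using lower_count[OF FB fW1 W(1) W1F fW2'] unfolding W_def f_def W2'_def by simp
  have "cond_prob_hit n W F \<le> (real (card W1) * (4 * rr n) * fact (f - 1)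
        + (\<Sum>G\<in>W2'. fact (card G) * fact (f - card G))) / fact f"
    using c1 c2 by (smt (verit) divide_right_mono fact_ge_zero)
  also have "\<dots> = real (card W1) * (4 * rr n) * (fact (f - 1) / fact f)
        + (\<Sum>G\<in>W2'. fact (card G) * fact (f - card G) / fact f)"
    by (simp add: add_divide_distrib sum_divide_distrib)
  also have "\<dots> \<le> \<delta> / 2 + \<delta> / 2"
  proof (rule add_mono)
    have ff: "fact (f - 1) / fact f = 1 / (real f :: real)"
      using fact_reduce[OF fpos, where 'a = real] by simp
    have "real (card W1) * (4 * rr n) * (1 / real f) \<le> real p * (4 * rr n + 1) * (4 / real n)"
    proof (rule mult_mono)
      show "real (card W1) * (4 * rr n) \<le> real p * (4 * rr n + 1)"
        using W(4) fr by (intro mult_mono) auto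
      show "1 / real f \<le> 4 / real n" using fbig big(4) fpos by (simp add: divide_simps)
      show "0 \<le> real p * (4 * rr n + 1)" using fr by simp
      show "0 \<le> 1 / real f" by simp
    qed
    then show "real (card W1) * (4 * rr n) * (fact (f - 1) / fact f) \<le> \<delta> / 2"
      using big(3) ff by simp
  next
    show "(\<Sum>G\<in>W2'. fact (card G) * fact (f - card G) / fact f) \<le> \<delta> / 2"
    proof (rule W2_bound[OF fW2' _ fW2 W(5)[folded L_def] big(4)])
      show "W2' \<subseteq> W2" unfolding W2'_def by blast
      show "1 \<le> L" unfolding L_def using l1 isq by simp
      have "s - i \<le> q" using isq by linarith
      then show "L \<le> l * q" unfolding L_def by (rule mult_le_mono2)
      show "\<gamma> * (4 * real (l * q)) ^ (l * q) \<le> \<delta> / 2" by (rule gam(1))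
      show "0 < \<gamma>" by (rule gam(2))
      fix G assume G: "G \<in> W2'"
      then have GF: "G \<subseteq> F" and LG: "L \<le> card (F - G)" and GB: "G \<in> Btilde n"
        unfolding W2'_def using W(2) by auto
      have fF: "finite F" using Fn finite_subset by blast
      have cG: "card G \<le> f" unfolding f_def using GF fF by (simp add: card_mono)
      have cFG: "card (F - G) = f - card G" unfolding f_def using GF fF by (simp add: card_Diff_subset finite_subset)
      have gr: "\<bar>real (card G) - real n / 2\<bar> < rr n" using GB unfolding Btilde_iff by simp
      have "s - i \<le> q" using isq by linarith
      then have "L \<le> l * q" unfolding L_def by (rule mult_le_mono2)
      then have "real L \<le> real (l * q)" by (rule of_nat_mono)
      then have Lg: "L \<le> card G" using gr big(1,2) by linarith
      show "fact (card G) * fact (f - card G) / fact f \<le> (4 * real L / real n) ^ L"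
        using binom_ratio_bound[OF Lg _ cG fbig big(4)] LG cFG by simp
    qed
  qed
  finally have "cond_prob_hit n W F \<le> \<delta>" by simp
  then show ?thesis unfolding lower_bad_def using Msne WF hit by blast
qed


lemma upper_case:
  fixes M :: "(nat set set \<times> nat set list) set" and F :: "nat set"
  assumes big: "rr n \<le> real n / 4" "real (l * q) \<le> real n / 4" "real p * (4 * rr n + 1) * 4 / real n \<le> \<delta> / 2" "0 < n"
    and gam: "\<gamma> * (4 * real (l * q)) ^ (l * q) \<le> \<delta> / 2" "0 < \<gamma>"
    and l1: "1 \<le> l" and isq: "1 \<le> s" "s < i" "i \<le> q"
    and Mc: "\<forall>m\<in>M. q_marked_chain n q m \<and> set (snd m) \<subseteq> Btilde n"
    and gM: "gapped_marked l M" and FL: "F \<in> Lev i M" and bad: "isg_bad n p l i s \<gamma> M F"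
  shows "upper_bad n i \<delta> M F"
proof -
  obtain W1 W2 where W: "W1 \<subseteq> Btilde n" "W2 \<subseteq> Btilde n" "W1 \<inter> Down n F = {}" "card W1 \<le> p"
    "real (card W2) \<le> \<gamma> * real n ^ (l * (i - s))"
    "\<forall>m\<in>Msub M F i. set (snd m) \<inter> Ustar n F W1 \<noteq> {} \<or> mem (snd m) s \<in> W2"
    using bad isq(2) unfolding isg_bad_def by auto
  define L where "L = l * (i - s)"
  obtain m0 where m0: "m0 \<in> M" "mem (snd m0) i = F" using FL unfolding Lev_def by blast
  have qc0: "q_chain q (snd m0)" using Mc m0(1) unfolding q_marked_chain_def by blast
  have FB: "F \<in> Btilde n" using mem_in_set[OF qc0, of i] isq m0 Mc by auto
  have Fn: "F \<subseteq> {1..n}" using FB unfolding Btilde_iff by simp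
  have fr: "\<bar>real (card F) - real n / 2\<bar> < rr n" using FB unfolding Btilde_iff by simp
  have fW1: "finite W1" using W(1) finite_Btilde finite_subset by blast
  have fW2: "finite W2" using W(2) finite_Btilde finite_subset by blast
  define W2' where "W2' = {G \<in> W2. F \<subseteq> G \<and> L \<le> card (G - F)}"
  define W where "W = Ustar n F W1 \<union> W2'"
  have fW2': "finite W2'" unfolding W2'_def using fW2 by simp
  have WF: "\<forall>D\<in>W. F \<subseteq> D \<and> D \<subseteq> {1..n}"
  proof
    fix D assume "D \<in> W"
    then have "D \<in> Ustar n F W1 \<or> D \<in> W2'" unfolding W_def by blast
    then show "F \<subseteq> D \<and> D \<subseteq> {1..n}"
    proof
      assume "D \<in> Ustar n F W1" then show ?thesis unfolding Ustar_def Up_def by auto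
    next
      assume "D \<in> W2'" then have "D \<in> Btilde n" "F \<subseteq> D" unfolding W2'_def using W(2) by auto
      then show ?thesis unfolding Btilde_iff by simp
    qed
  qed
  have WF': "\<forall>D\<in>W. F \<subseteq> D" using WF by blast
  have W1F: "\<forall>B\<in>W1. \<not> B \<subseteq> F"
  proof
    fix B assume B: "B \<in> W1"
    then have "B \<in> Btilde n" using W(1) by blast
    then have "B \<subseteq> {1..n}" unfolding Btilde_iff by simp
    then show "\<not> B \<subseteq> F" using W(3) B unfolding Down_def by blast
  qed
  have Msne: "Msub M F i \<noteq> {}" unfolding Msub_def using m0 by blast
  have hit: "\<forall>m\<in>Msub M F i. set (snd m) \<inter> W \<noteq> {}"
  proof
    fix m assume mM: "m \<in> Msub M F i"
    then have m1: "m \<in> M" "mem (snd m) i = F" unfolding Msub_def by auto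
    show "set (snd m) \<inter> W \<noteq> {}"
    proof (cases "set (snd m) \<inter> Ustar n F W1 \<noteq> {}")
      case True
      then show ?thesis unfolding W_def by blast
    next
      case False
      then have G: "mem (snd m) s \<in> W2" using W(6) mM by blast
      have qc: "q_chain q (snd m)" using Mc m1(1) unfolding q_marked_chain_def by blast
      have gf: "gapped_family l (set (snd m))"
      proof -
        have "gapped_family l (members M)" using gM unfolding gapped_marked_def .
        moreover have "set (snd m) \<subseteq> members M" unfolding members_def using m1(1) by blast
        ultimately show ?thesis by (rule gapped_family_mono)
      qed
      have finQ: "\<forall>X\<in>set (snd m). finite X"
      proof
        fix X assume "X \<in> set (snd m)"
        then have "X \<in> Btilde n" using Mc m1(1) by blast
        then have "X \<subseteq> {1..n}" unfolding Btilde_iff by simp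
        then show "finite X" by (rule finite_subset) simp
      qed
      have g: "mem (snd m) i \<subseteq> mem (snd m) s \<and> l * (i - s) \<le> card (mem (snd m) s - mem (snd m) i)"
        using gap[OF qc gf finQ isq(1)] isq by simp
      have "mem (snd m) s \<in> W2'" unfolding W2'_def L_def using G g m1(2) by simp
      moreover have "mem (snd m) s \<in> set (snd m)" using mem_in_set[OF qc] isq by simp
      ultimately show ?thesis unfolding W_def by blast
    qed
  qed
  define f where "f = card F"
  define mm where "mm = n - f"
  have fF: "finite F" using Fn finite_subset by blast
  have fn: "f \<le> n" unfolding f_def using Fn card_mono[of "{1..n}" F] by simp
  have mmr: "real mm = real n - real f" unfolding mm_def using fn by (simp add: of_nat_diff)
  have mbig: "real n / 4 \<le> real mm" using fr big(1) mmr unfolding f_def by linarith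
  have mpos: "0 < mm"
  proof -
    have "0 < real n / 4" using big(4) by simp
    then have "0 < real mm" using mbig by linarith
    then show ?thesis by simp
  qed
  let ?H = "{zs \<in> PS ({1..n} - F). \<exists>k. F \<union> set (take k zs) \<in> W}"
  have c1: "cond_prob_hit n W F \<le> real (card ?H) / fact mm"
    using cph_upper[OF Fn WF'] unfolding mm_def f_def .
  have W2'c: "\<forall>G\<in>W2'. F \<subseteq> G \<and> G \<subseteq> {1..n}" using WF unfolding W_def by blast
  have c2: "real (card ?H) \<le> real (card W1) * (4 * rr n + 1) * fact (mm - 1)
        + (\<Sum>G\<in>W2'. fact (card (G - F)) * fact (mm - card (G - F)))"
    using upper_count[OF FB fW1 W(1) W1F fW2' W2'c] unfolding W_def mm_def f_def by simp
  have "cond_prob_hit n W F \<le> (real (card W1) * (4 * rr n + 1) * fact (mm - 1)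
        + (\<Sum>G\<in>W2'. fact (card (G - F)) * fact (mm - card (G - F)))) / fact mm"
    using c1 c2 by (smt (verit) divide_right_mono fact_ge_zero)
  also have "\<dots> = real (card W1) * (4 * rr n + 1) * (fact (mm - 1) / fact mm)
        + (\<Sum>G\<in>W2'. fact (card (G - F)) * fact (mm - card (G - F)) / fact mm)"
    by (simp add: add_divide_distrib sum_divide_distrib)
  also have "\<dots> \<le> \<delta> / 2 + \<delta> / 2"
  proof (rule add_mono)
    have ff: "fact (mm - 1) / fact mm = 1 / (real mm :: real)"
      using fact_reduce[OF mpos, where 'a = real] by simp
    have "real (card W1) * (4 * rr n + 1) * (1 / real mm) \<le> real p * (4 * rr n + 1) * (4 / real n)"
    proof (rule mult_mono)
      show "real (card W1) * (4 * rr n + 1) \<le> real p * (4 * rr n + 1)"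
        using W(4) fr by (intro mult_mono) auto
      show "1 / real mm \<le> 4 / real n" using mbig big(4) mpos by (simp add: divide_simps)
      show "0 \<le> real p * (4 * rr n + 1)" using fr by simp
      show "0 \<le> 1 / real mm" by simp
    qed
    note bnd = this
    have "real (card W1) * (4 * rr n + 1) * (fact (mm - 1) / fact mm) = real (card W1) * (4 * rr n + 1) * (1 / real mm)"
      by (simp only: ff)
    also have "\<dots> \<le> real p * (4 * rr n + 1) * (4 / real n)" by (rule bnd)
    also have "\<dots> = real p * (4 * rr n + 1) * 4 / real n" by simp
    also have "\<dots> \<le> \<delta> / 2" by (rule big(3))
    finally show "real (card W1) * (4 * rr n + 1) * (fact (mm - 1) / fact mm) \<le> \<delta> / 2" .
  next
    show "(\<Sum>G\<in>W2'. fact (card (G - F)) * fact (mm - card (G - F)) / fact mm) \<le> \<delta> / 2"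
    proof (rule W2_bound[OF fW2' _ fW2 W(5)[folded L_def] big(4)])
      show "W2' \<subseteq> W2" unfolding W2'_def by blast
      show "1 \<le> L" unfolding L_def using l1 isq by simp
      have "i - s \<le> q" using isq by linarith
      then show "L \<le> l * q" unfolding L_def by (rule mult_le_mono2)
      show "\<gamma> * (4 * real (l * q)) ^ (l * q) \<le> \<delta> / 2" by (rule gam(1))
      show "0 < \<gamma>" by (rule gam(2))
      fix G assume G: "G \<in> W2'"
      then have FG: "F \<subseteq> G" and LG: "L \<le> card (G - F)" and GB: "G \<in> Btilde n"
        unfolding W2'_def using W(2) by auto
      have Gn: "G \<subseteq> {1..n}" using GB unfolding Btilde_iff by simp
      have fG: "finite G" using Gn finite_subset by blast
      have gn: "card G \<le> n" using Gn card_mono[of "{1..n}" G] by simp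
      have cFG: "card (G - F) = card G - f" unfolding f_def using FG fF by (simp add: card_Diff_subset)
      have fg: "f \<le> card G" unfolding f_def using FG fG by (simp add: card_mono)
      have cG: "card (G - F) \<le> mm" unfolding mm_def using cFG gn by simp
      have gr: "\<bar>real (card G) - real n / 2\<bar> < rr n" using GB unfolding Btilde_iff by simp
      have "i - s \<le> q" using isq by linarith
      then have "L \<le> l * q" unfolding L_def by (rule mult_le_mono2)
      then have "real L \<le> real (l * q)" by (rule of_nat_mono)
      then have "real L \<le> real n - real (card G)" using gr big(1,2) by linarith
      then have Lg: "L \<le> mm - card (G - F)" unfolding mm_def using cFG fg gn fn by linarith
      show "fact (card (G - F)) * fact (mm - card (G - F)) / fact mm \<le> (4 * real L / real n) ^ L"
        using binom_ratio_bound[OF LG Lg cG mbig big(4)] by simp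
    qed
  qed
  finally have "cond_prob_hit n W F \<le> \<delta>" by simp
  then show ?thesis unfolding upper_bad_def using Msne WF hit by blast
qed



lemma eventually_large:
  fixes p c \<delta> :: real
  assumes d: "\<delta> > 0"
  shows "\<exists>N. \<forall>n\<ge>N. 2 * sqrt (real n * ln (real n)) \<le> real n / 4 \<and> c \<le> real n / 4
     \<and> p * (4 * (2 * sqrt (real n * ln (real n))) + 1) * 4 / real n \<le> \<delta> / 2 \<and> 0 < n"
proof -
  have h1: "((\<lambda>n::nat. (2 * sqrt (real n * ln (real n))) / real n) \<longlongrightarrow> 0) sequentially"
    by real_asymp
  have h3: "((\<lambda>n::nat. (4 * (2 * sqrt (real n * ln (real n))) + 1) * 4 / real n) \<longlongrightarrow> 0) sequentially"
    by real_asymp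
  have h3': "((\<lambda>n::nat. p * ((4 * (2 * sqrt (real n * ln (real n))) + 1) * 4 / real n)) \<longlongrightarrow> p * 0) sequentially"
    by (rule tendsto_mult_left[OF h3])
  have e1: "eventually (\<lambda>n::nat. (2 * sqrt (real n * ln (real n))) / real n < 1/4) sequentially"
    using order_tendstoD(2)[OF h1, of "1/4"] by simp
  have e3: "eventually (\<lambda>n::nat. p * ((4 * (2 * sqrt (real n * ln (real n))) + 1) * 4 / real n) < \<delta> / 2) sequentially"
    using order_tendstoD(2)[OF h3', of "\<delta>/2"] d by simp
  have e2: "eventually (\<lambda>n::nat. nat \<lceil>4 * c\<rceil> + 1 \<le> n) sequentially"
    by (rule eventually_ge_at_top)
  have "eventually (\<lambda>n::nat. 2 * sqrt (real n * ln (real n)) \<le> real n / 4 \<and> c \<le> real n / 4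
     \<and> p * (4 * (2 * sqrt (real n * ln (real n))) + 1) * 4 / real n \<le> \<delta> / 2 \<and> 0 < n) sequentially"
    using e1 e2 e3
  proof eventually_elim
    case (elim n)
    have np: "0 < n" using elim(2) by simp
    then have npr: "0 < real n" by simp
    have "2 * sqrt (real n * ln (real n)) < real n / 4"
      using elim(1) npr by (simp add: divide_less_eq)
    moreover have "c \<le> real n / 4"
    proof -
      have "4 * c \<le> of_int \<lceil>4 * c\<rceil>" by (rule le_of_int_ceiling)
      also have "\<dots> \<le> real n" using elim(2) by linarith
      finally show ?thesis by simp
    qed
    moreover have "p * (4 * (2 * sqrt (real n * ln (real n))) + 1) * 4 / real n \<le> \<delta> / 2"
      using elim(3) by (simp add: mult.assoc)
    ultimately show ?case using np by simp
  qed
  then show ?thesis unfolding eventually_sequentially by blast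
qed

theorem lemma4p17:
  fixes P :: "'a set" and le :: "'a \<Rightarrow> 'a \<Rightarrow> bool"
  assumes "tree_poset P le"
  shows "\<forall>\<delta>::real. \<forall>l q::nat. \<delta> > 0 \<and> l \<ge> 1 \<and> q \<ge> 1 \<longrightarrow>
    (\<exists>\<gamma>::real. \<gamma> > 0 \<and> (\<exists>N::nat. \<forall>n\<ge>N. \<forall>i\<in>{1..q}. \<forall>s\<in>{1..q}. i \<noteq> s \<longrightarrow>
      (\<forall>\<M> F. (\<forall>m\<in>\<M>. q_marked_chain n q m \<and> set (snd m) \<subseteq> Btilde n) \<and>
              gapped_marked l \<M> \<and> F \<in> Lev i \<M> \<and>
              isg_bad n (card P) l i s \<gamma> \<M> F \<longrightarrow>
         (i < s \<longrightarrow> lower_bad n i \<delta> \<M> F) \<and> (s < i \<longrightarrow> upper_bad n i \<delta> \<M> F))))"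
proof (intro allI impI)
  fix \<delta> :: real and l q :: nat
  assume h: "\<delta> > 0 \<and> l \<ge> 1 \<and> q \<ge> 1"
  then have d: "\<delta> > 0" and l1: "1 \<le> l" and q1: "1 \<le> q" by auto
  define p where "p = card P"
  define K where "K = l * q"
  have K1: "1 \<le> K" unfolding K_def using l1 q1 by simp
  have Kpos: "0 < (4 * real K) ^ K" using K1 by simp
  define \<gamma> where "\<gamma> = \<delta> / (2 * (4 * real K) ^ K)"
  have gpos: "0 < \<gamma>" unfolding \<gamma>_def using d Kpos by simp
  have geq: "\<gamma> * (4 * real K) ^ K \<le> \<delta> / 2" unfolding \<gamma>_def using Kpos by simp
  obtain N where N: "\<forall>n\<ge>N. 2 * sqrt (real n * ln (real n)) \<le> real n / 4 \<and> real K \<le> real n / 4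
     \<and> real p * (4 * (2 * sqrt (real n * ln (real n))) + 1) * 4 / real n \<le> \<delta> / 2 \<and> 0 < n"
    using eventually_large[OF d, of "real K" "real p"] by blast
  have key: "(i < s \<longrightarrow> lower_bad n i \<delta> \<M> F) \<and> (s < i \<longrightarrow> upper_bad n i \<delta> \<M> F)"
    if n: "N \<le> n" and i: "i \<in> {1..q}" and s: "s \<in> {1..q}" and ne: "i \<noteq> s"
      and H: "(\<forall>m\<in>\<M>. q_marked_chain n q m \<and> set (snd m) \<subseteq> Btilde n) \<and>
              gapped_marked l \<M> \<and> F \<in> Lev i \<M> \<and> isg_bad n (card P) l i s \<gamma> \<M> F"
    for n i s \<M> F
  proof -
    have Nn: "2 * sqrt (real n * ln (real n)) \<le> real n / 4 \<and> real K \<le> real n / 4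
     \<and> real p * (4 * (2 * sqrt (real n * ln (real n))) + 1) * 4 / real n \<le> \<delta> / 2 \<and> 0 < n"
      using N n by blast
    have big: "rr n \<le> real n / 4" "real (l * q) \<le> real n / 4"
      "real p * (4 * rr n + 1) * 4 / real n \<le> \<delta> / 2" "0 < n"
      using Nn unfolding rr_def K_def by auto
    have gam: "\<gamma> * (4 * real (l * q)) ^ (l * q) \<le> \<delta> / 2" using geq unfolding K_def .
    have Mc: "\<forall>m\<in>\<M>. q_marked_chain n q m \<and> set (snd m) \<subseteq> Btilde n" and gM: "gapped_marked l \<M>"
      and FL: "F \<in> Lev i \<M>" and bad: "isg_bad n p l i s \<gamma> \<M> F" using H unfolding p_def by auto
    have A: "i < s \<longrightarrow> lower_bad n i \<delta> \<M> F"
    proof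
      assume is': "i < s"
      show "lower_bad n i \<delta> \<M> F"
        by (rule lower_case[OF big gam gpos l1 _ is' _ Mc gM FL bad]) (use i s in auto)
    qed
    have B: "s < i \<longrightarrow> upper_bad n i \<delta> \<M> F"
    proof
      assume si: "s < i"
      show "upper_bad n i \<delta> \<M> F"
        by (rule upper_case[OF big gam gpos l1 _ si _ Mc gM FL bad]) (use i s in auto)
    qed
    show ?thesis using A B by blast
  qed
  show "\<exists>\<gamma>::real. \<gamma> > 0 \<and> (\<exists>N::nat. \<forall>n\<ge>N. \<forall>i\<in>{1..q}. \<forall>s\<in>{1..q}. i \<noteq> s \<longrightarrow>
      (\<forall>\<M> F. (\<forall>m\<in>\<M>. q_marked_chain n q m \<and> set (snd m) \<subseteq> Btilde n) \<and>
              gapped_marked l \<M> \<and> F \<in> Lev i \<M> \<and>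
              isg_bad n (card P) l i s \<gamma> \<M> F \<longrightarrow>
         (i < s \<longrightarrow> lower_bad n i \<delta> \<M> F) \<and> (s < i \<longrightarrow> upper_bad n i \<delta> \<M> F)))"
    using gpos key by blast
qed

end
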